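(* Let $q$ be a prime power and let $C_1\subseteq\mathbb{F}_q^n$ and $C_2\subseteq\mathbb{F}_q^n$ be linear codes of dimensions $k_1$ and $k_2$ (with minimum distances $d_1,d_2$) such that $C_2^\perp\subseteq C_1$, where $C_2^\perp$ is the dual of $C_2$ with respect to the standard bilinear form on $\mathbb{F}_q^n$. Let $k=k_1+k_2-n$ and let $\mathcal{C}\subseteq(\mathbb{C}^q)^{\otimes n}$ be the associated CSS code. Then there exists a quantum circuit encoding $\mathcal{C}$, i.e. a unitary $U$ on $(\mathbb{C}^q)^{\otimes n}$ together with a set $I\subseteq\{1,\dots,n\}$ of $k$ qudit positions such that $U$ maps the subspace $\mathrm{span}\{|x\rangle : x\in\mathbb{F}_q^n,\ x_j=0 \text{ for all } j\notin I\}$ onto $\mathcal{C}$, which is a product of $n-k_2$ gates $F$, at most $A:=k_1n-\binom{k_1+1}{2}$ gates $\mathrm{ADD}$, and at most $A+(n-1)$ multiplication gates $M_\gamma$.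
   Context: Let $q=p^m$ with $p$ prime, $\omega=\exp(2\pi i/p)$, and for $\alpha\in\mathbb{F}_q$ let $\mathrm{tr}(\alpha)=\sum_{i=0}^{m-1}\alpha^{p^i}\in\mathbb{F}_p$ (identified with $\mathbb{Z}/p\mathbb{Z}$ in exponents of $\omega$). A qudit is $\mathbb{C}^q$ with orthonormal basis $\{|x\rangle: x\in\mathbb{F}_q\}$; $n$ qudits have basis $|x\rangle=|x_1\rangle\otimes\cdots\otimes|x_n\rangle$, $x\in\mathbb{F}_q^n$. Gates (acting on the indicated qudits, identity elsewhere): $M_\gamma=\sum_{y}|\gamma y\rangle\langle y|$ for $\gamma\in\mathbb{F}_q\setminus\{0\}$; $F=\frac{1}{\sqrt q}\sum_{x,z\in\mathbb{F}_q}\omega^{\mathrm{tr}(xz)}|z\rangle\langle x|$; $\mathrm{ADD}^{(a,b)}=\sum_{x,y}|x\rangle_a|x+y\rangle_b\langle y|_b\langle x|_a$ on an ordered pair of distinct qudits $(a,b)$. The CSS code associated with $C_1,C_2$ (with $C_2^\perp\subseteq C_1$) is the subspace of $(\mathbb{C}^q)^{\otimes n}$ spanned by the states $|\psi_w\rangle=|C_2^\perp|^{-1/2}\sum_{c\in C_2^\perp}|c+w\rangle$ for $w\in C_1$; it has dimension $q^{k}$ with $k=k_1+k_2-n$. *)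

theory Defs
  imports "HOL-Analysis.Analysis" "HOL-Library.Function_Algebras"
begin

text \<open>The field F_q is a finite field type 'a; q = CARD('a), p = CHAR('a), q = p^m.\<close>

definition ext_deg :: "'a::{finite,field} itself \<Rightarrow> nat" where
  "ext_deg _ = (THE m. CARD('a) = CHAR('a) ^ m)"

definition trace :: "'a::{finite,field} \<Rightarrow> 'a" where
  "trace \<alpha> = (\<Sum>i<ext_deg TYPE('a). \<alpha> ^ (CHAR('a) ^ i))"

text \<open>tr(alpha) lies in the prime field F_p, identified with Z/pZ = {0..<p}.\<close>
definition tr_nat :: "'a::{finite,field} \<Rightarrow> nat" where
  "tr_nat \<alpha> = (THE j. j < CHAR('a) \<and> of_nat j = trace \<alpha>)"

definition omega :: "'a::{finite,field} itself \<Rightarrow> complex" where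
  "omega _ = exp (2 * of_real pi * \<i> / of_nat CHAR('a))"

definition fscale :: "'a::field \<Rightarrow> ('n \<Rightarrow> 'a) \<Rightarrow> ('n \<Rightarrow> 'a)" where
  "fscale c x = (\<lambda>j. c * x j)"

definition linear_code :: "('n::finite \<Rightarrow> 'a::{finite,field}) set \<Rightarrow> bool" where
  "linear_code C = module.subspace fscale C"

definition code_dim :: "('n::finite \<Rightarrow> 'a::{finite,field}) set \<Rightarrow> nat" where
  "code_dim C = vector_space.dim fscale C"

definition dual_code :: "('n::finite \<Rightarrow> 'a::{finite,field}) set \<Rightarrow> ('n \<Rightarrow> 'a) set" where
  "dual_code C = {x. \<forall>y\<in>C. (\<Sum>j\<in>UNIV. x j * y j) = 0}"

section \<open>Qudit states: vectors in (C^q)^{\<otimes> n} as functions F_q^n \<Rightarrow> C\<close>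

type_synonym ('n, 'a) qstate = "('n \<Rightarrow> 'a) \<Rightarrow> complex"

definition ket :: "('n \<Rightarrow> 'a) \<Rightarrow> ('n, 'a) qstate" where
  "ket x = (\<lambda>y. if y = x then 1 else 0)"

definition cscale :: "complex \<Rightarrow> ('n, 'a) qstate \<Rightarrow> ('n, 'a) qstate" where
  "cscale c \<psi> = (\<lambda>y. c * \<psi> y)"

definition qspan :: "('n, 'a) qstate set \<Rightarrow> ('n, 'a) qstate set" where
  "qspan S = module.span cscale S"

definition qinner :: "('n::finite, 'a::finite) qstate \<Rightarrow> ('n, 'a) qstate \<Rightarrow> complex" where
  "qinner \<psi> \<phi> = (\<Sum>x\<in>UNIV. cnj (\<psi> x) * \<phi> x)"

definition unitary_op :: "(('n::finite, 'a::finite) qstate \<Rightarrow> ('n, 'a) qstate) \<Rightarrow> bool" where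
  "unitary_op U \<longleftrightarrow> (\<forall>\<psi> \<phi>. qinner (U \<psi>) (U \<phi>) = qinner \<psi> \<phi>) \<and> surj U"

definition css_state :: "('n::finite \<Rightarrow> 'a::{finite,field}) set \<Rightarrow> ('n \<Rightarrow> 'a) \<Rightarrow> ('n, 'a) qstate" where
  "css_state C2 w = cscale (1 / complex_of_real (sqrt (real (card (dual_code C2)))))
       (\<Sum>c\<in>dual_code C2. ket (c + w))"

definition css_code :: "('n::finite \<Rightarrow> 'a::{finite,field}) set \<Rightarrow> ('n \<Rightarrow> 'a) set \<Rightarrow> ('n, 'a) qstate set" where
  "css_code C1 C2 = qspan (css_state C2 ` C1)"

datatype ('n, 'a) gate = MulG 'a 'n | FourierG 'n | AddG 'n 'n

text \<open>AddG a b is ADD^(a,b): control a, target b.\<close>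

fun wf_gate :: "('n, 'a::field) gate \<Rightarrow> bool" where
  "wf_gate (MulG \<gamma> a) = (\<gamma> \<noteq> 0)"
| "wf_gate (FourierG a) = True"
| "wf_gate (AddG a b) = (a \<noteq> b)"

fun gate_ket :: "('n, 'a::{finite,field}) gate \<Rightarrow> ('n \<Rightarrow> 'a) \<Rightarrow> ('n, 'a) qstate" where
  "gate_ket (MulG \<gamma> a) x = ket (x(a := \<gamma> * x a))"
| "gate_ket (FourierG a) x =
     (\<Sum>z\<in>UNIV. cscale (omega TYPE('a) ^ tr_nat (x a * z) / complex_of_real (sqrt (real CARD('a))))
                       (ket (x(a := z))))"
| "gate_ket (AddG a b) x = ket (x(b := x a + x b))"

definition apply_gate :: "('n::finite, 'a::{finite,field}) gate \<Rightarrow> ('n, 'a) qstate \<Rightarrow> ('n, 'a) qstate" where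
  "apply_gate g \<psi> = (\<Sum>x\<in>UNIV. cscale (\<psi> x) (gate_ket g x))"

text \<open>A circuit is a list of gates, the head applied first.\<close>
fun circuit_op :: "('n::finite, 'a::{finite,field}) gate list \<Rightarrow> ('n, 'a) qstate \<Rightarrow> ('n, 'a) qstate" where
  "circuit_op [] = id"
| "circuit_op (g # gs) = circuit_op gs \<circ> apply_gate g"

fun is_mul :: "('n, 'a) gate \<Rightarrow> bool" where
  "is_mul (MulG _ _) = True" | "is_mul _ = False"
fun is_fourier :: "('n, 'a) gate \<Rightarrow> bool" where
  "is_fourier (FourierG _) = True" | "is_fourier _ = False"
fun is_add :: "('n, 'a) gate \<Rightarrow> bool" where
  "is_add (AddG _ _) = True" | "is_add _ = False"

end

theory Submission
  imports Defs "HOL-Number_Theory.Cong" "HOL-Computational_Algebra.Polynomial"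
begin

lemma fin_CHAR_pos: "CHAR('a::{finite,field}) > 0"
  by (rule finite_imp_CHAR_pos) simp

lemma fin_CHAR_prime: "prime CHAR('a::{finite,field})"
  using prime_CHAR_semidom fin_CHAR_pos by blast

lemma fin_CHAR_ge2: "CHAR('a::{finite,field}) \<ge> 2"
  using fin_CHAR_prime prime_ge_2_nat by blast

lemma of_nat_mod_CHAR: "(of_nat (n mod CHAR('a)) :: 'a::{finite,field}) = of_nat n"
  by (simp add: of_nat_eq_iff_cong_CHAR cong_def)

lemma of_nat_inj_CHAR:
  assumes "i < CHAR('a)" "j < CHAR('a)" "(of_nat i :: 'a::{finite,field}) = of_nat j"
  shows "i = j"
  using assms by (simp add: of_nat_eq_iff_cong_CHAR cong_def)

lemma of_nat_CHAR_minus1: "(of_nat (CHAR('a) - 1) :: 'a::{finite,field}) = -1"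
proof -
  have "(of_nat (CHAR('a) - 1) :: 'a) + 1 = of_nat (CHAR('a) - 1 + 1)" by simp
  also have "CHAR('a) - 1 + 1 = CHAR('a)" using fin_CHAR_pos[where 'a='a] by simp
  finally have "(of_nat (CHAR('a) - 1) :: 'a) + 1 = 0" by simp
  then show ?thesis by (simp add: eq_neg_iff_add_eq_0)
qed

lemma of_nat_pow_CHAR: "(of_nat j :: 'a::{finite,field}) ^ CHAR('a) = of_nat j"
proof (induction j)
  case 0 then show ?case using fin_CHAR_pos[where 'a='a] by (simp add: power_0_left)
next
  case (Suc j)
  have "(of_nat (Suc j) :: 'a) ^ CHAR('a) = (of_nat j + 1) ^ CHAR('a)" by (metis of_nat_Suc add.commute)
  also have "\<dots> = of_nat j ^ CHAR('a) + 1 ^ CHAR('a)"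
    by (rule freshmans_dream[OF fin_CHAR_prime refl])
  finally show ?case using Suc by (simp add: add.commute)
qed

lemma inverse_of_nat_range:
  assumes "(c::'a::{finite,field}) \<in> range of_nat" shows "inverse c \<in> range of_nat"
proof -
  obtain j where c: "c = of_nat j" using assms by auto
  show ?thesis
  proof (cases "c = 0")
    case True then show ?thesis by (auto intro: range_eqI[of _ _ 0])
  next
    case False
    let ?p = "CHAR('a)"
    have p2: "?p = Suc (Suc (?p - 2))" using fin_CHAR_ge2[where 'a='a] by simp
    have "c ^ ?p = c" using c of_nat_pow_CHAR by simp
    hence "c * (c ^ (?p - 2) * c) = c * 1" by (subst (asm) p2) (simp add: algebra_simps)
    hence "c ^ (?p - 2) * c = 1" using False by simp
    hence "inverse c = c ^ (?p - 2)" using False by (simp add: field_simps)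
    then show ?thesis by (metis c of_nat_power rangeI)
  qed
qed

lemma card_prime_power_aux:
  fixes H :: "'a::{finite,field} set"
  assumes "0 \<in> H" "\<And>x y. x \<in> H \<Longrightarrow> y \<in> H \<Longrightarrow> x + y \<in> H"
    "\<And>x c. x \<in> H \<Longrightarrow> c \<in> range of_nat \<Longrightarrow> c * x \<in> H" "card H = CHAR('a) ^ k"
  shows "\<exists>m. CARD('a) = CHAR('a) ^ m"
  using assms
proof (induction "card (UNIV - H)" arbitrary: H k rule: less_induct)
  case less
  show ?case
  proof (cases "H = UNIV")
    case True then show ?thesis using less.prems(4) by auto
  next
    case False
    then obtain x where x: "x \<notin> H" by auto
    define p where "p = CHAR('a)"
    have p2: "p \<ge> 2" unfolding p_def by (rule fin_CHAR_ge2)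
    have negH: "- h \<in> H" if "h \<in> H" for h
    proof -
      have "of_nat (p - 1) * h \<in> H" using less.prems(3) that by auto
      then show ?thesis unfolding p_def of_nat_CHAR_minus1 by simp
    qed
    define f where "f = (\<lambda>(h,j). h + of_nat j * x)"
    define H' where "H' = f ` (H \<times> {..<p})"
    have inj: "inj_on f (H \<times> {..<p})"
    proof (rule inj_onI, clarsimp simp: f_def)
      fix h j h' j' assume h: "h \<in> H" "h' \<in> H" "j < p" "j' < p"
        and eq: "h + of_nat j * x = h' + of_nat j' * x"
      show "h = h' \<and> j = j'"
      proof (cases "j = j'")
        case True then show ?thesis using eq by simp
      next
        case False
        define d where "d = (of_nat j + of_nat (p - 1) * of_nat j' :: 'a)"
        have d': "d = of_nat j - of_nat j'" unfolding d_def p_def of_nat_CHAR_minus1 by simp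
        have "d \<noteq> 0" using of_nat_inj_CHAR[of j j', where 'a='a] h False unfolding d' p_def by auto
        have dx: "d * x = h' + - h" using eq unfolding d' by (simp add: algebra_simps)
        have "h' + - h \<in> H" using less.prems(2)[of h' "-h"] negH[of h] h by simp
        moreover have "d \<in> range of_nat" unfolding d_def by (metis of_nat_add of_nat_mult rangeI)
        hence "inverse d \<in> range of_nat" by (rule inverse_of_nat_range)
        ultimately have "inverse d * (h' + - h) \<in> H" using less.prems(3) by auto
        also have "inverse d * (h' + - h) = x" using dx \<open>d \<noteq> 0\<close>
          by (metis dx inverse_unique mult.assoc mult.commute mult_1_right right_inverse)
        finally show ?thesis using x by simp
      qed
    qed
    have cardH': "card H' = CHAR('a) ^ Suc k"
      unfolding H'_def using card_image[OF inj] less.prems(4) by (simp add: card_cartesian_product p_def)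
    have HH': "H \<subseteq> H'"
    proof
      fix h assume "h \<in> H"
      then have "(h, 0) \<in> H \<times> {..<p}" using p2 by auto
      then show "h \<in> H'" unfolding H'_def f_def by force
    qed
    have xH': "x \<in> H'"
    proof -
      have "(0, 1) \<in> H \<times> {..<p}" using p2 less.prems(1) by auto
      then show ?thesis unfolding H'_def f_def by force
    qed
    have lt: "card (UNIV - H') < card (UNIV - H)"
      by (rule psubset_card_mono) (use HH' xH' x in auto)
    have c0: "0 \<in> H'"
    proof -
      have "(0, 0) \<in> H \<times> {..<p}" using p2 less.prems(1) by auto
      then show ?thesis unfolding H'_def f_def by force
    qed
    have cadd: "a + b \<in> H'" if ab: "a \<in> H'" "b \<in> H'" for a b
    proof -
      obtain h1 j1 where 1: "h1 \<in> H" "a = h1 + of_nat j1 * x" using ab(1) unfolding H'_def f_def by force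
      obtain h2 j2 where 2: "h2 \<in> H" "b = h2 + of_nat j2 * x" using ab(2) unfolding H'_def f_def by force
      have "a + b = (h1 + h2) + of_nat ((j1 + j2) mod p) * x"
        unfolding 1 2 p_def of_nat_mod_CHAR by (simp add: algebra_simps)
      moreover have "(h1 + h2, (j1 + j2) mod p) \<in> H \<times> {..<p}"
        using 1 2 less.prems(2) p2 by auto
      ultimately show ?thesis unfolding H'_def f_def by force
    qed
    have cmul: "c * a \<in> H'" if ac: "a \<in> H'" "c \<in> range of_nat" for a c
    proof -
      obtain h1 j1 where 1: "h1 \<in> H" "a = h1 + of_nat j1 * x" using ac(1) unfolding H'_def f_def by force
      obtain i where c: "c = of_nat i" using ac(2) by auto
      have "c * a = c * h1 + of_nat ((i * j1) mod p) * x"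
        unfolding 1 c p_def of_nat_mod_CHAR by (simp add: algebra_simps)
      moreover have "(c * h1, (i * j1) mod p) \<in> H \<times> {..<p}"
        using 1 less.prems(3) ac(2) p2 by auto
      ultimately show ?thesis unfolding H'_def f_def by force
    qed
    show ?thesis using less.hyps[OF lt c0 cadd cmul cardH'] by blast
  qed
qed

lemma CARD_prime_power: "\<exists>m. CARD('a::{finite,field}) = CHAR('a) ^ m"
  by (rule card_prime_power_aux[of "{0}" 0]) auto

lemma ext_deg: "CARD('a::{finite,field}) = CHAR('a) ^ ext_deg TYPE('a)"
proof -
  obtain m where m: "CARD('a) = CHAR('a) ^ m" using CARD_prime_power by blast
  have "ext_deg TYPE('a) = m" unfolding ext_deg_def
  proof (rule the_equality)
    show "CARD('a) = CHAR('a) ^ m" by (rule m)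
    fix m' assume "CARD('a) = CHAR('a) ^ m'"
    then show "m' = m" using m fin_CHAR_ge2[where 'a='a] by (simp add: power_inject_exp)
  qed
  then show ?thesis using m by simp
qed

lemma ext_deg_pos: "ext_deg TYPE('a::{finite,field}) > 0"
proof (rule ccontr)
  assume "\<not> ?thesis"
  then have "CARD('a) = 1" using ext_deg[where 'a='a] by simp
  moreover have "CARD('a) \<ge> 2"
  proof -
    have "{0, 1::'a} \<subseteq> UNIV" by simp
    then have "card {0, 1::'a} \<le> CARD('a)" by (intro card_mono) auto
    then show ?thesis by simp
  qed
  ultimately show False by simp
qed

lemma fin_power_card: "(x::'a::{finite,field}) ^ CARD('a) = x"
proof (cases "x = 0")
  case False
  have "x * (\<Prod>y\<in>UNIV-{0}. x * y) = x * x ^ (card (UNIV :: 'a set) - 1) * \<Prod>(UNIV-{0})"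
    by (simp add: prod.distrib mult_ac)
  also have "x * x ^ (card (UNIV :: 'a set) - 1) = x ^ Suc (card (UNIV :: 'a set) - 1)"
    by (subst power_Suc) auto
  also have "Suc (card (UNIV :: 'a set) - 1) = card (UNIV :: 'a set)"
    using finite_UNIV_card_ge_0[where ?'a = 'a] by simp
  also have "(\<Prod>y\<in>UNIV-{0}. x * y) = (\<Prod>y\<in>UNIV-{0}. y)"
    by (rule prod.reindex_bij_witness[of _ "\<lambda>y. y / x" "\<lambda>y. x * y"]) (use False in auto)
  finally show ?thesis
    by simp
qed (use finite_UNIV_card_ge_0[where ?'a = 'a] in auto)

lemma trace_add: "trace (u + v) = trace u + trace (v::'a::{finite,field})"
  unfolding trace_def by (simp add: freshmans_dream'[OF fin_CHAR_prime refl] sum.distrib)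

lemma trace_zero: "trace (0::'a::{finite,field}) = 0"
  unfolding trace_def using fin_CHAR_pos[where 'a='a] by (simp add: power_0_left)

lemma trace_pow: "trace (a::'a::{finite,field}) ^ CHAR('a) = trace a"
proof -
  let ?p = "CHAR('a)" and ?m = "ext_deg TYPE('a)"
  have "trace a ^ ?p = (\<Sum>i<?m. (a ^ (?p ^ i)) ^ ?p)"
    unfolding trace_def by (rule freshmans_dream_sum[OF fin_CHAR_prime refl])
  also have "\<dots> = (\<Sum>i<?m. a ^ (?p ^ Suc i))"
    by (simp add: power_mult[symmetric] mult.commute)
  also have "\<dots> = (\<Sum>i<?m. a ^ (?p ^ i))"
  proof -
    have "(\<Sum>i<Suc ?m. a ^ (?p ^ i)) = a ^ (?p ^ 0) + (\<Sum>i<?m. a ^ (?p ^ Suc i))"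
      by (rule sum.lessThan_Suc_shift)
    moreover have "(\<Sum>i<Suc ?m. a ^ (?p ^ i)) = (\<Sum>i<?m. a ^ (?p ^ i)) + a ^ (?p ^ ?m)"
      by simp
    moreover have "a ^ (?p ^ ?m) = a" using fin_power_card[of a] ext_deg[where 'a='a] by simp
    ultimately show ?thesis by (simp add: add.commute)
  qed
  finally show ?thesis unfolding trace_def .
qed

lemma trace_prime_field: "\<exists>j<CHAR('a). of_nat j = trace (a::'a::{finite,field})"
proof (rule ccontr)
  assume na: "\<not> ?thesis"
  let ?p = "CHAR('a)"
  define Q :: "'a poly" where "Q = monom 1 ?p - [:0, 1:]"
  have pQ: "poly Q t = t ^ ?p - t" for t unfolding Q_def by (simp add: poly_monom)
  have cQ: "coeff Q ?p = 1" unfolding Q_def using fin_CHAR_ge2[where 'a='a]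
    by (simp add: coeff_monom coeff_pCons split: nat.split)
  have Q0: "Q \<noteq> 0" using cQ by auto
  have dQ: "degree Q \<le> ?p" unfolding Q_def
    using fin_CHAR_ge2[where 'a='a] degree_diff_le[of "monom (1::'a) ?p" ?p "[:0,1:]"]
    by (simp add: degree_monom_le)
  have sub: "insert (trace a) (of_nat ` {..<?p}) \<subseteq> {t. poly Q t = 0}"
    using trace_pow[of a] of_nat_pow_CHAR[where 'a='a] by (auto simp: pQ)
  have inj: "inj_on (of_nat :: nat \<Rightarrow> 'a) {..<?p}"
    by (rule inj_onI) (use of_nat_inj_CHAR[where 'a='a] in auto)
  have "trace a \<notin> of_nat ` {..<?p}" using na by auto
  then have "card (insert (trace a) (of_nat ` {..<?p})) = Suc ?p"
    using card_image[OF inj] by simp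
  moreover have "card (insert (trace a) (of_nat ` {..<?p})) \<le> card {t. poly Q t = 0}"
    by (rule card_mono[OF _ sub]) simp
  moreover have "card {t. poly Q t = 0} \<le> degree Q" by (rule card_poly_roots_bound[OF Q0])
  ultimately show False using dQ by simp
qed

lemma tr_nat: "tr_nat (a::'a::{finite,field}) < CHAR('a) \<and> of_nat (tr_nat a) = trace a"
proof -
  obtain j where j: "j < CHAR('a)" "of_nat j = trace a" using trace_prime_field by blast
  have "tr_nat a = j" unfolding tr_nat_def
    by (rule the_equality) (use j of_nat_inj_CHAR[where 'a='a] in auto)
  then show ?thesis using j by simp
qed

lemma tr_nat_eqI: "j < CHAR('a) \<Longrightarrow> of_nat j = trace (a::'a::{finite,field}) \<Longrightarrow> tr_nat a = j"
  using tr_nat[of a] of_nat_inj_CHAR[where 'a='a] by metis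

lemma tr_nat_zero: "tr_nat (0::'a::{finite,field}) = 0"
  by (rule tr_nat_eqI) (auto simp: trace_zero fin_CHAR_pos)

lemma tr_nat_add: "tr_nat (u + v::'a::{finite,field}) = (tr_nat u + tr_nat v) mod CHAR('a)"
  by (rule tr_nat_eqI) (auto simp: fin_CHAR_pos of_nat_mod_CHAR tr_nat trace_add)

lemma trace_nonzero: "\<exists>z::'a::{finite,field}. trace z \<noteq> 0"
proof (rule ccontr)
  assume "\<not> ?thesis"
  then have all0: "trace z = 0" for z :: 'a by auto
  let ?p = "CHAR('a)" and ?m = "ext_deg TYPE('a)"
  define T :: "'a poly" where "T = (\<Sum>i<?m. monom 1 (?p ^ i))"
  have pT: "poly T z = trace z" for z unfolding T_def trace_def by (simp add: poly_sum poly_monom)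
  have p2: "?p \<ge> 2" by (rule fin_CHAR_ge2)
  have m1: "?m \<ge> 1" using ext_deg_pos[where 'a='a] by simp
  have "coeff T (?p ^ (?m - 1)) = (\<Sum>i<?m. if i = ?m - 1 then 1 else 0)"
    unfolding T_def coeff_sum coeff_monom
    by (rule sum.cong) (use p2 in \<open>auto simp: power_inject_exp\<close>)
  also have "\<dots> = 1" using m1 by simp
  finally have "T \<noteq> 0" by auto
  have dT: "degree T \<le> ?p ^ (?m - 1)" unfolding T_def
  proof (rule degree_sum_le)
    fix i assume "i \<in> {..<?m}"
    then have "?p ^ i \<le> ?p ^ (?m - 1)" using p2 by (intro power_increasing) auto
    then show "degree (monom (1::'a) (?p ^ i)) \<le> ?p ^ (?m - 1)"
      using degree_monom_le[of "1::'a" "?p ^ i"] by linarith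
  qed simp
  have "CARD('a) \<le> degree T"
  proof -
    have "{z. poly T z = 0} = UNIV" using all0 pT by auto
    then show ?thesis using card_poly_roots_bound[OF \<open>T \<noteq> 0\<close>] by simp
  qed
  moreover have "?p ^ (?m - 1) < ?p ^ ?m" using p2 m1 by (intro power_strict_increasing) auto
  ultimately show False using dT ext_deg[where 'a='a] by simp
qed


definition chi :: "'a::{finite,field} \<Rightarrow> complex" where
  "chi z = omega TYPE('a) ^ tr_nat z"

lemma omega_pow_CHAR: "omega TYPE('a::{finite,field}) ^ CHAR('a) = 1"
proof -
  have "omega TYPE('a) ^ CHAR('a) = exp (of_nat CHAR('a) * (2 * of_real pi * \<i> / of_nat CHAR('a)))"
    unfolding omega_def by (rule exp_of_nat_mult[symmetric])
  also have "of_nat CHAR('a) * (2 * of_real pi * \<i> / of_nat CHAR('a)) = 2 * of_real pi * \<i>"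
    using fin_CHAR_pos[where 'a='a] by (simp add: field_simps)
  finally show ?thesis by simp
qed

lemma omega_pow_eq_1:
  assumes "omega TYPE('a::{finite,field}) ^ j = 1" shows "CHAR('a) dvd j"
proof -
  let ?p = "CHAR('a)"
  have p0: "real ?p > 0" using fin_CHAR_pos[where 'a='a] by simp
  have "omega TYPE('a) ^ j = exp (of_nat j * (2 * of_real pi * \<i> / of_nat ?p))"
    unfolding omega_def by (rule exp_of_nat_mult[symmetric])
  with assms have "exp (of_nat j * (2 * of_real pi * \<i> / of_nat ?p)) = 1" by simp
  then obtain n :: int where n: "Im (of_nat j * (2 * of_real pi * \<i> / of_nat ?p)) = of_int (2 * n) * pi"
    unfolding exp_eq_1 by blast
  have "Im (of_nat j * (2 * of_real pi * \<i> / of_nat ?p)) = real j * 2 * pi / real ?p"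
    by (simp add: Im_divide_of_real)
  with n have "real j * 2 * pi / real ?p = of_int (2 * n) * pi" by simp
  then have "real j = real_of_int n * real ?p" using p0 pi_gt_zero
    by (simp add: field_simps)
  then have "int j = n * int ?p" by (metis of_int_eq_iff of_int_mult of_int_of_nat_eq)
  then have "int ?p dvd int j" by simp
  then show ?thesis by simp
qed

lemma omega_pow_mod: "omega TYPE('a::{finite,field}) ^ (j mod CHAR('a)) = omega TYPE('a) ^ j"
proof -
  have "omega TYPE('a) ^ j = omega TYPE('a) ^ (CHAR('a) * (j div CHAR('a)) + j mod CHAR('a))"
    by (metis mult_div_mod_eq)
  also have "\<dots> = omega TYPE('a) ^ (j mod CHAR('a))"
    by (simp only: power_add power_mult omega_pow_CHAR power_one mult_1_left)
  finally show ?thesis by simp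
qed

lemma chi_add: "chi (u + v) = chi u * chi (v::'a::{finite,field})"
  unfolding chi_def tr_nat_add omega_pow_mod by (simp add: power_add)

lemma chi_zero: "chi (0::'a::{finite,field}) = 1"
  unfolding chi_def tr_nat_zero by simp

lemma chi_nonzero: "chi (u::'a::{finite,field}) \<noteq> 0"
  using chi_add[of u "-u"] chi_zero[where 'a='a] by auto

lemma cnj_omega: "cnj (omega TYPE('a::{finite,field})) * omega TYPE('a) = 1"
proof -
  have "cnj (omega TYPE('a)) * omega TYPE('a) =
        exp (cnj (2 * of_real pi * \<i> / of_nat CHAR('a))) * exp (2 * of_real pi * \<i> / of_nat CHAR('a))"
    unfolding omega_def exp_cnj ..
  also have "\<dots> = exp (cnj (2 * of_real pi * \<i> / of_nat CHAR('a)) + 2 * of_real pi * \<i> / of_nat CHAR('a))"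
    by (simp flip: exp_add)
  also have "cnj (2 * of_real pi * \<i> / of_nat CHAR('a)) + 2 * of_real pi * \<i> / of_nat CHAR('a) = 0"
    by simp
  finally show ?thesis by simp
qed

lemma cnj_chi: "cnj (chi u) = chi (- u::'a::{finite,field})"
proof -
  have 1: "cnj (chi u) * chi u = 1"
    unfolding chi_def by (simp flip: power_mult_distrib add: cnj_omega)
  have 2: "chi (-u) * chi u = 1" using chi_add[of "-u" u] chi_zero[where 'a='a] by simp
  from 1 2 chi_nonzero[of u] show ?thesis by (metis mult_right_cancel)
qed

lemma sum_shift_UNIV: "(\<Sum>z\<in>UNIV. f (z + u)) = (\<Sum>z\<in>(UNIV::'a::{finite,ab_group_add} set). f z)"
  by (rule sum.reindex_bij_witness[of _ "\<lambda>z. z - u" "\<lambda>z. z + u"]) auto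

lemma chi_sum: "(\<Sum>z\<in>UNIV. chi (d * z)) = (if d = 0 then of_nat CARD('a) else (0::complex))"
  for d :: "'a::{finite,field}"
proof (cases "d = 0")
  case True then show ?thesis by (simp add: chi_zero)
next
  case False
  obtain z0 :: 'a where z0: "trace z0 \<noteq> 0" using trace_nonzero by blast
  have "tr_nat z0 \<noteq> 0" using tr_nat[of z0] z0 by (metis of_nat_0)
  moreover have "tr_nat z0 < CHAR('a)" using tr_nat[of z0] by simp
  ultimately have c1: "chi z0 \<noteq> 1" unfolding chi_def using omega_pow_eq_1[of "tr_nat z0", where 'a='a]
    by (metis nat_dvd_not_less neq0_conv)
  define S where "S = (\<Sum>z\<in>UNIV. chi (d * z))"
  have "S = (\<Sum>z\<in>UNIV. chi (d * (z + z0 / d)))" unfolding S_def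
    by (rule sum_shift_UNIV[symmetric, of "\<lambda>z. chi (d * z)"])
  also have "\<dots> = (\<Sum>z\<in>UNIV. chi (d * z) * chi z0)"
    using False by (simp add: distrib_left chi_add)
  also have "\<dots> = S * chi z0" unfolding S_def by (simp add: sum_distrib_right)
  finally have "S * (1 - chi z0) = 0" by (simp add: algebra_simps)
  then have "S = 0" using c1 by simp
  then show ?thesis using False S_def by simp
qed


lemma sum_fun_apply: "(\<Sum>i\<in>A. f i) x = (\<Sum>i\<in>A. f i x)"
  by (induction A rule: infinite_finite_induct) auto

lemma cscale_apply[simp]: "cscale c \<psi> x = c * \<psi> x"
  by (simp add: cscale_def)

lemma ket_apply: "ket x y = (if y = x then 1 else 0)"
  by (simp add: ket_def)

lemma module_cscale: "module (cscale :: complex \<Rightarrow> ('n, 'a) qstate \<Rightarrow> ('n, 'a) qstate)"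
  by unfold_locales (auto simp: cscale_def algebra_simps)

lemma vs_cscale: "vector_space (cscale :: complex \<Rightarrow> ('n, 'a) qstate \<Rightarrow> ('n, 'a) qstate)"
  using module_cscale by (simp add: module_iff_vector_space)

lemma apply_gate_apply:
  "apply_gate g \<psi> w = (\<Sum>x\<in>UNIV. \<psi> x * gate_ket g x w)"
  unfolding apply_gate_def by (simp add: sum_fun_apply)

lemma apply_gate_ket: "apply_gate g (ket x) = gate_ket g x"
proof
  fix w
  have "apply_gate g (ket x) w = (\<Sum>y\<in>UNIV. (if y = x then gate_ket g x w else 0))"
    unfolding apply_gate_apply by (rule sum.cong) (auto simp: ket_apply)
  then show "apply_gate g (ket x) w = gate_ket g x w" by simp
qed

lemma linear_apply_gate: "Vector_Spaces.linear cscale cscale (apply_gate g)"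
  unfolding Vector_Spaces.linear_iff
proof (intro conjI allI)
  show "vector_space (cscale :: complex \<Rightarrow> ('a, 'b) qstate \<Rightarrow> _)" by (rule vs_cscale)
  show "vector_space (cscale :: complex \<Rightarrow> ('a, 'b) qstate \<Rightarrow> _)" by (rule vs_cscale)
  fix x y :: "('a, 'b) qstate" and c
  show "apply_gate g (x + y) = apply_gate g x + apply_gate g y"
    by (rule ext) (simp add: apply_gate_apply distrib_right sum.distrib)
  show "apply_gate g (cscale c x) = cscale c (apply_gate g x)"
    by (rule ext) (simp add: apply_gate_apply sum_distrib_left mult.assoc)
qed

lemma linear_compose': "Vector_Spaces.linear cscale cscale f \<Longrightarrow> Vector_Spaces.linear cscale cscale g \<Longrightarrow> Vector_Spaces.linear cscale cscale (g \<circ> f)"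
  unfolding Vector_Spaces.linear_iff by auto

lemma linear_id': "Vector_Spaces.linear cscale cscale (id :: ('n, 'a) qstate \<Rightarrow> _)"
  unfolding Vector_Spaces.linear_iff using vs_cscale by auto

lemma linear_circuit: "Vector_Spaces.linear cscale cscale (circuit_op gs)"
proof (induction gs)
  case Nil show ?case unfolding circuit_op.simps by (rule linear_id')
next
  case (Cons g gs) show ?case unfolding circuit_op.simps by (rule linear_compose'[OF linear_apply_gate Cons])
qed

lemma circuit_append: "circuit_op (xs @ ys) = circuit_op ys \<circ> circuit_op xs"
  by (induction xs) auto

lemma linear_sum':
  assumes "Vector_Spaces.linear cscale cscale f"
  shows "f (\<Sum>i\<in>A. cscale (c i) (v i)) = (\<Sum>i\<in>A. cscale (c i) (f (v i)))"
proof -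
  interpret Vector_Spaces.linear cscale cscale f by fact
  show ?thesis by (simp add: sum scale)
qed

lemma linear_sum'':
  assumes "Vector_Spaces.linear cscale cscale f"
  shows "f (\<Sum>i\<in>A. v i) = (\<Sum>i\<in>A. f (v i))"
proof -
  interpret Vector_Spaces.linear cscale cscale f by fact
  show ?thesis by (simp add: sum)
qed

lemma linear_scale':
  assumes "Vector_Spaces.linear cscale cscale f"
  shows "f (cscale c v) = cscale c (f v)"
proof -
  interpret Vector_Spaces.linear cscale cscale f by fact
  show ?thesis by (simp add: scale)
qed

lemma qinner_sum_left: "qinner (\<Sum>i\<in>A. \<psi> i) \<phi> = (\<Sum>i\<in>A. qinner (\<psi> i) \<phi>)"
  unfolding qinner_def sum_fun_apply
  by (simp add: sum_distrib_right sum.swap[of _ A])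

lemma qinner_sum_right: "qinner \<phi> (\<Sum>i\<in>A. \<psi> i) = (\<Sum>i\<in>A. qinner \<phi> (\<psi> i))"
  unfolding qinner_def sum_fun_apply
  by (simp add: sum_distrib_left sum.swap[of _ A])

lemma qinner_cscale_left: "qinner (cscale c \<psi>) \<phi> = cnj c * qinner \<psi> \<phi>"
  unfolding qinner_def by (simp add: sum_distrib_left mult.assoc)

lemma qinner_cscale_right: "qinner \<psi> (cscale c \<phi>) = c * qinner \<psi> \<phi>"
  unfolding qinner_def by (simp add: sum_distrib_left mult.left_commute)

lemma qinner_ket: "qinner (ket x) (ket y) = (if x = y then 1 else 0)"
proof -
  have "qinner (ket x) (ket y) = (\<Sum>w\<in>UNIV. if w = x then (if x = y then 1 else 0) else 0)"
    unfolding qinner_def by (rule sum.cong) (auto simp: ket_apply)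
  then show ?thesis by simp
qed

lemma qinner_sums:
  "qinner (\<Sum>i\<in>A. cscale (a i) (u i)) (\<Sum>j\<in>B. cscale (b j) (v j)) =
   (\<Sum>i\<in>A. \<Sum>j\<in>B. cnj (a i) * b j * qinner (u i) (v j))"
  by (subst qinner_sum_left) (simp add: qinner_cscale_left qinner_sum_right qinner_cscale_right mult_ac)

lemma gate_iso:
  assumes "\<And>x y. qinner (gate_ket g x) (gate_ket g y) = (if x = y then 1 else 0)"
  shows "qinner (apply_gate g \<psi>) (apply_gate g \<phi>) = qinner \<psi> \<phi>"
proof -
  have "qinner (apply_gate g \<psi>) (apply_gate g \<phi>) =
        (\<Sum>x\<in>UNIV. \<Sum>y\<in>UNIV. cnj (\<psi> x) * \<phi> y * (if x = y then 1 else 0))"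
    unfolding apply_gate_def qinner_sums assms ..
  also have "\<dots> = (\<Sum>x\<in>UNIV. cnj (\<psi> x) * \<phi> x)"
  proof (rule sum.cong[OF refl])
    fix x
    have "(\<Sum>y\<in>UNIV. cnj (\<psi> x) * \<phi> y * (if x = y then 1 else 0)) =
          (\<Sum>y\<in>UNIV. if x = y then cnj (\<psi> x) * \<phi> y else 0)"
      by (rule sum.cong) auto
    then show "(\<Sum>y\<in>UNIV. cnj (\<psi> x) * \<phi> y * (if x = y then 1 else 0)) = cnj (\<psi> x) * \<phi> x"
      by simp
  qed
  finally show ?thesis unfolding qinner_def .
qed

lemma fourier_ket_eq:
  "gate_ket (FourierG a) x =
     (\<Sum>z\<in>UNIV. cscale (chi (x a * z) / complex_of_real (sqrt (real CARD('a)))) (ket (x(a := z))))"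
  for x :: "'n \<Rightarrow> 'a::{finite,field}"
  by (simp add: chi_def)

lemma fourier_orth:
  fixes x y :: "'n::finite \<Rightarrow> 'a::{finite,field}"
  shows "qinner (gate_ket (FourierG a) x) (gate_ket (FourierG a) y) = (if x = y then 1 else 0)"
proof -
  define c where "c = complex_of_real (sqrt (real CARD('a)))"
  have cc: "cnj c * c = of_nat CARD('a)" unfolding c_def
    by (simp flip: of_real_mult)
  have c0: "c \<noteq> 0" unfolding c_def by simp
  define B where "B \<longleftrightarrow> x(a := 0) = y(a := 0)"
  have eqk: "(x(a := z) = y(a := z')) \<longleftrightarrow> (z = z' \<and> B)" for z z'
    unfolding B_def
  proof
    assume h: "x(a := z) = y(a := z')"
    have "z = z'" using fun_cong[OF h, of a] by simp
    moreover have "x(a := 0) = y(a := 0)"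
    proof
      fix j show "(x(a := 0)) j = (y(a := 0)) j" using fun_cong[OF h, of j] by (cases "j = a") auto
    qed
    ultimately show "z = z' \<and> x(a := 0) = y(a := 0)" ..
  next
    assume h: "z = z' \<and> x(a := 0) = y(a := 0)"
    show "x(a := z) = y(a := z')"
    proof
      fix j show "(x(a := z)) j = (y(a := z')) j"
        using fun_cong[OF conjunct2[OF h], of j] conjunct1[OF h] by (cases "j = a") auto
    qed
  qed
  define G where "G z z' = cnj (chi (x a * z) / c) * (chi (y a * z') / c)" for z z'
  have "qinner (gate_ket (FourierG a) x) (gate_ket (FourierG a) y) =
     (\<Sum>z\<in>UNIV. \<Sum>z'\<in>UNIV. G z z' *
         (if z = z' \<and> B then 1 else 0))"
    unfolding G_def by (simp only: fourier_ket_eq qinner_sums qinner_ket eqk c_def)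
  also have "\<dots> = (if B then (\<Sum>z\<in>UNIV. G z z) else 0)"
  proof (cases B)
    case True
    have "(\<Sum>z'\<in>UNIV. G z z' * (if z = z' \<and> B then 1 else 0)) = G z z" for z
    proof -
      have "(\<Sum>z'\<in>UNIV. G z z' * (if z = z' \<and> B then 1 else 0)) =
            (\<Sum>z'\<in>UNIV. if z = z' then G z z' else 0)"
        by (rule sum.cong) (use True in auto)
      then show ?thesis by simp
    qed
    then show ?thesis using True by simp
  qed simp
  also have "(\<Sum>z\<in>UNIV. G z z) = (\<Sum>z\<in>UNIV. chi ((y a - x a) * z)) / (cnj c * c)"
    unfolding sum_divide_distrib
  proof (rule sum.cong[OF refl])
    fix z
    have "G z z = cnj (chi (x a * z)) * chi (y a * z) / (cnj c * c)"
      unfolding G_def by (simp add: field_simps)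
    also have "cnj (chi (x a * z)) * chi (y a * z) = chi ((y a - x a) * z)"
      unfolding cnj_chi chi_add[symmetric] by (simp add: algebra_simps)
    finally show "G z z = chi ((y a - x a) * z) / (cnj c * c)" .
  qed
  also have "(\<Sum>z\<in>UNIV. chi ((y a - x a) * z)) / (cnj c * c) = (if x a = y a then 1 else 0)"
    unfolding chi_sum cc by auto
  finally have *: "qinner (gate_ket (FourierG a) x) (gate_ket (FourierG a) y) =
     (if B then (if x a = y a then 1 else 0) else 0)" .
  have "(B \<and> x a = y a) \<longleftrightarrow> x = y"
    using eqk[of "x a" "y a"] by auto
  then show ?thesis unfolding * by auto
qed


fun cl :: "('n, 'a::field) gate \<Rightarrow> ('n \<Rightarrow> 'a) \<Rightarrow> ('n \<Rightarrow> 'a)" where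
  "cl (MulG \<gamma> a) x = x(a := \<gamma> * x a)"
| "cl (AddG a b) x = x(b := x a + x b)"
| "cl (FourierG a) x = x"

lemma gate_ket_cl: "\<not> is_fourier g \<Longrightarrow> gate_ket g x = ket (cl g x)"
  by (cases g) auto

lemma inj_cl: "wf_gate g \<Longrightarrow> inj (cl g)"
proof (cases g)
  case (MulG \<gamma> a)
  assume "wf_gate g"
  then have "\<gamma> \<noteq> 0" using MulG by simp
  show ?thesis
  proof (rule injI)
    fix x y assume "cl g x = cl g y"
    then have h: "x(a := \<gamma> * x a) = y(a := \<gamma> * y a)" using MulG by simp
    show "x = y"
    proof
      fix j show "x j = y j" using fun_cong[OF h, of j] \<open>\<gamma> \<noteq> 0\<close> by (cases "j = a") auto
    qed
  qed
next
  case (AddG a b)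
  assume "wf_gate g"
  then have "a \<noteq> b" using AddG by simp
  show ?thesis
  proof (rule injI)
    fix x y assume "cl g x = cl g y"
    then have h: "x(b := x a + x b) = y(b := y a + y b)" using AddG by simp
    have ha: "x a = y a" using fun_cong[OF h, of a] \<open>a \<noteq> b\<close> by simp
    show "x = y"
    proof
      fix j show "x j = y j" using fun_cong[OF h, of j] ha by (cases "j = b") auto
    qed
  qed
next
  case (FourierG a) then show ?thesis by (simp add: inj_on_def)
qed

lemma gate_orth:
  fixes g :: "('n::finite, 'a::{finite,field}) gate"
  assumes "wf_gate g"
  shows "qinner (gate_ket g x) (gate_ket g y) = (if x = y then 1 else 0)"
proof (cases "is_fourier g")
  case True
  then obtain a where ga: "g = FourierG a" by (cases g) auto
  show ?thesis unfolding ga by (rule fourier_orth)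
next
  case False
  then show ?thesis using inj_cl[OF assms]
    by (simp add: gate_ket_cl qinner_ket inj_eq)
qed

lemma qinner_self_zero: "qinner v v = 0 \<Longrightarrow> v = 0"
proof -
  assume h: "qinner v v = 0"
  have "qinner v v = complex_of_real (\<Sum>x\<in>UNIV. (norm (v x))^2)"
    unfolding qinner_def of_real_sum by (rule sum.cong[OF refl]) (simp only: complex_norm_square mult.commute)
  then have "(\<Sum>x\<in>UNIV. (norm (v x))^2) = 0" using h by (metis of_real_eq_0_iff)
  then have "\<forall>x\<in>UNIV. (norm (v x))^2 = 0" by (subst (asm) sum_nonneg_eq_0_iff) auto
  then show "v = 0" by (auto simp: fun_eq_iff)
qed

lemma fdvs: "finite_dimensional_vector_space (cscale :: complex \<Rightarrow> ('n::finite,'a::finite) qstate \<Rightarrow> _) (range ket)"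
proof -
  interpret vector_space "cscale :: complex \<Rightarrow> ('n,'a) qstate \<Rightarrow> _" by (rule vs_cscale)
  have ketinj: "ket x = ket y \<longleftrightarrow> x = y" for x y :: "'n \<Rightarrow> 'a"
    by (metis ket_apply zero_neq_one)
  show ?thesis
  proof unfold_locales
    show "finite (range (ket :: ('n \<Rightarrow> 'a) \<Rightarrow> _))" by simp
    show "independent (range (ket :: ('n \<Rightarrow> 'a) \<Rightarrow> _))"
      unfolding independent_explicit_module
    proof (intro allI impI)
      fix t u v assume t: "finite t" "t \<subseteq> range (ket :: ('n \<Rightarrow> 'a) \<Rightarrow> _)"
        and s: "(\<Sum>v\<in>t. cscale (u v) v) = 0" and v: "v \<in> t"
      obtain x where vx: "v = ket x" using t v by auto
      have "0 = (\<Sum>w\<in>t. cscale (u w) w) x" using s by simp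
      also have "\<dots> = (\<Sum>w\<in>t. if w = v then u w else 0)"
        unfolding sum_fun_apply
      proof (rule sum.cong[OF refl])
        fix w assume "w \<in> t"
        then obtain y where wy: "w = ket y" using t by auto
        show "cscale (u w) w x = (if w = v then u w else 0)"
          by (simp add: wy vx ketinj ket_apply)
      qed
      also have "\<dots> = u v" using v t by simp
      finally show "u v = 0" by simp
    qed
    have "\<psi> \<in> span (range ket)" for \<psi> :: "('n, 'a) qstate"
    proof -
      have "\<psi> = (\<Sum>x\<in>UNIV. cscale (\<psi> x) (ket x))"
      proof
        fix w
        have "(\<Sum>x\<in>UNIV. cscale (\<psi> x) (ket x)) w = (\<Sum>x\<in>UNIV. if x = w then \<psi> w else 0)"
          unfolding sum_fun_apply by (rule sum.cong) (auto simp: ket_apply)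
        then show "\<psi> w = (\<Sum>x\<in>UNIV. cscale (\<psi> x) (ket x)) w" by simp
      qed
      also have "\<dots> \<in> span (range ket)"
        by (intro span_sum span_scale span_base) auto
      finally show ?thesis .
    qed
    then show "span (range (ket :: ('n \<Rightarrow> 'a) \<Rightarrow> _)) = UNIV" by auto
  qed
qed

lemma iso_circuit:
  fixes gs :: "('n::finite, 'a::{finite,field}) gate list"
  assumes "\<forall>g\<in>set gs. wf_gate g"
  shows "qinner (circuit_op gs \<psi>) (circuit_op gs \<phi>) = qinner \<psi> \<phi>"
  using assms
proof (induction gs arbitrary: \<psi> \<phi>)
  case Nil then show ?case by simp
next
  case (Cons g gs)
  have "qinner (circuit_op (g # gs) \<psi>) (circuit_op (g # gs) \<phi>) =
        qinner (apply_gate g \<psi>) (apply_gate g \<phi>)" using Cons by simp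
  also have "\<dots> = qinner \<psi> \<phi>" by (rule gate_iso, rule gate_orth) (use Cons.prems in simp)
  finally show ?case .
qed

lemma unitary_circuit:
  fixes gs :: "('n::finite, 'a::{finite,field}) gate list"
  assumes "\<forall>g\<in>set gs. wf_gate g"
  shows "unitary_op (circuit_op gs)"
  unfolding unitary_op_def
proof (intro conjI allI)
  show "qinner (circuit_op gs \<psi>) (circuit_op gs \<phi>) = qinner \<psi> \<phi>" for \<psi> \<phi>
    by (rule iso_circuit[OF assms])
  have lin: "Vector_Spaces.linear cscale cscale (circuit_op gs)" by (rule linear_circuit)
  have "inj (circuit_op gs)"
  proof (rule injI)
    fix \<psi> \<phi> assume h: "circuit_op gs \<psi> = circuit_op gs \<phi>"
    interpret Vector_Spaces.linear cscale cscale "circuit_op gs" by (rule lin)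
    have "circuit_op gs (\<psi> - \<phi>) = 0" using h by (simp add: diff)
    have "qinner (\<psi> - \<phi>) (\<psi> - \<phi>) = qinner (circuit_op gs (\<psi> - \<phi>)) (circuit_op gs (\<psi> - \<phi>))"
      using iso_circuit[OF assms, of "\<psi> - \<phi>" "\<psi> - \<phi>"] by simp
    also have "\<dots> = 0" unfolding \<open>circuit_op gs (\<psi> - \<phi>) = 0\<close> by (simp add: qinner_def)
    finally have "qinner (\<psi> - \<phi>) (\<psi> - \<phi>) = 0" .
    then have "\<psi> - \<phi> = 0" by (rule qinner_self_zero)
    then show "\<psi> = \<phi>" by simp
  qed
  then show "surj (circuit_op gs)"
    using finite_dimensional_vector_space.linear_inj_imp_surj[OF fdvs lin] by simp
qed


definition psurj :: "('n \<Rightarrow> 'a::zero) set \<Rightarrow> 'n set \<Rightarrow> bool" where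
  "psurj V S \<longleftrightarrow> (\<forall>y. \<exists>v\<in>V. \<forall>s\<in>S. v s = y s)"

definition pinj :: "('n \<Rightarrow> 'a::zero) set \<Rightarrow> 'n set \<Rightarrow> bool" where
  "pinj V S \<longleftrightarrow> (\<forall>v\<in>V. (\<forall>s\<in>S. v s = 0) \<longrightarrow> v = 0)"

lemma fscale_apply: "fscale c v j = c * v j"
  by (simp add: fscale_def)

lemma vs_fscale: "vector_space (fscale :: 'a::field \<Rightarrow> ('n \<Rightarrow> 'a) \<Rightarrow> _)"
  by unfold_locales (auto simp: fscale_def algebra_simps fun_eq_iff)

lemma module_fscale: "module (fscale :: 'a::field \<Rightarrow> ('n \<Rightarrow> 'a) \<Rightarrow> _)"
  using vs_fscale by (simp add: module_iff_vector_space)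

lemma lc_unfold: "linear_code V \<longleftrightarrow> 0 \<in> V \<and> (\<forall>x\<in>V. \<forall>y\<in>V. x + y \<in> V) \<and> (\<forall>c. \<forall>x\<in>V. fscale c x \<in> V)"
  unfolding linear_code_def module.subspace_def[OF module_fscale] ..

definition supp_set :: "'n set \<Rightarrow> ('n \<Rightarrow> 'a::zero) set" where
  "supp_set P = {a. \<forall>j. j \<notin> P \<longrightarrow> a j = 0}"

context
  fixes V :: "('n::finite \<Rightarrow> 'a::{finite,field}) set"
  assumes lc: "linear_code V"
begin

lemma lc_zero: "0 \<in> V" using lc by (simp add: lc_unfold)
lemma lc_add: "x \<in> V \<Longrightarrow> y \<in> V \<Longrightarrow> x + y \<in> V" using lc by (simp add: lc_unfold)
lemma lc_scale: "x \<in> V \<Longrightarrow> fscale c x \<in> V" using lc by (simp add: lc_unfold)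
lemma lc_neg: "x \<in> V \<Longrightarrow> - x \<in> V"
proof -
  assume "x \<in> V"
  then have "fscale (-1) x \<in> V" by (rule lc_scale)
  moreover have "fscale (-1) x = - x" by (rule ext) (simp add: fscale_apply)
  ultimately show ?thesis by simp
qed
lemma lc_diff: "x \<in> V \<Longrightarrow> y \<in> V \<Longrightarrow> x - y \<in> V"
  using lc_add[of x "- y"] lc_neg[of y] by simp
lemma lc_sum: "(\<And>i. i \<in> A \<Longrightarrow> f i \<in> V) \<Longrightarrow> (\<Sum>i\<in>A. fscale (c i) (f i)) \<in> V"
proof (induction A rule: infinite_finite_induct)
  case (infinite A)
  then show ?case using lc_zero by (metis sum.infinite)
next
  case empty then show ?case using lc_zero by (metis sum.empty)
next
  case (insert a A)
  have "(\<Sum>i\<in>insert a A. fscale (c i) (f i)) = fscale (c a) (f a) + (\<Sum>i\<in>A. fscale (c i) (f i))"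
    by (rule sum.insert[OF insert.hyps])
  moreover have "fscale (c a) (f a) \<in> V" by (rule lc_scale) (use insert.prems in auto)
  moreover have "(\<Sum>i\<in>A. fscale (c i) (f i)) \<in> V" by (rule insert.IH) (use insert.prems in auto)
  ultimately show ?case by (metis lc_add)
qed

lemma info_extend: "psurj V P0 \<Longrightarrow> \<exists>S. P0 \<subseteq> S \<and> psurj V S \<and> pinj V S"
proof (induction "card (UNIV - P0)" arbitrary: P0 rule: less_induct)
  case less
  show ?case
  proof (cases "pinj V P0")
    case True then show ?thesis using less.prems by blast
  next
    case False
    then obtain v where v: "v \<in> V" "\<forall>s\<in>P0. v s = 0" "v \<noteq> 0" unfolding pinj_def by blast
    then obtain j where j: "v j \<noteq> 0" by (auto simp: fun_eq_iff)
    have jP: "j \<notin> P0" using v j by auto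
    have ps: "psurj V (insert j P0)"
      unfolding psurj_def
    proof
      fix y
      obtain u where u: "u \<in> V" "\<forall>s\<in>P0. u s = y s" using less.prems unfolding psurj_def by blast
      define w where "w = u + fscale ((y j - u j) / v j) v"
      have "w \<in> V" unfolding w_def using u v by (intro lc_add lc_scale)
      moreover have "\<forall>s\<in>insert j P0. w s = y s" using u v j by (auto simp: w_def fscale_apply)
      ultimately show "\<exists>w\<in>V. \<forall>s\<in>insert j P0. w s = y s" by blast
    qed
    have "card (UNIV - insert j P0) < card (UNIV - P0)"
      by (rule psubset_card_mono) (use jP in auto)
    from less.hyps[OF this ps] show ?thesis by blast
  qed
qed

definition sysv :: "'n set \<Rightarrow> 'n \<Rightarrow> ('n \<Rightarrow> 'a)" where
  "sysv S s = (SOME v. v \<in> V \<and> (\<forall>t\<in>S. v t = (if t = s then 1 else 0)))"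

lemma sysv: assumes "psurj V S"
  shows "sysv S s \<in> V" "t \<in> S \<Longrightarrow> sysv S s t = (if t = s then 1 else 0)"
proof -
  from assms[unfolded psurj_def, rule_format, of "\<lambda>t. if t = s then 1 else 0"]
  obtain v where "v \<in> V" "\<forall>t\<in>S. v t = (if t = s then 1 else 0)"
    by blast
  then have "\<exists>v. v \<in> V \<and> (\<forall>t\<in>S. v t = (if t = s then 1 else 0))" by auto
  from someI_ex[OF this] show "sysv S s \<in> V" "t \<in> S \<Longrightarrow> sysv S s t = (if t = s then 1 else 0)"
    unfolding sysv_def by auto
qed

lemma fsum_apply: "(\<Sum>s\<in>A. fscale (c s) (f s)) j = (\<Sum>s\<in>A. c s * f s j)"
  by (simp add: sum_fun_apply fscale_apply)

lemma sum_delta_S: "t \<in> (S::'n set) \<Longrightarrow> (\<Sum>s\<in>S. c s * (if t = s then 1 else 0)) = (c t :: 'a)"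
proof -
  assume t: "t \<in> S"
  have "(\<Sum>s\<in>S. c s * (if t = s then 1 else 0)) = (\<Sum>s\<in>S. if s = t then c s else 0)"
    by (rule sum.cong) auto
  then show ?thesis using t by simp
qed

lemma pinj_eq: "pinj V S \<Longrightarrow> x \<in> V \<Longrightarrow> y \<in> V \<Longrightarrow> (\<forall>s\<in>S. x s = y s) \<Longrightarrow> x = y"
  using lc_diff[of x y] unfolding pinj_def by fastforce

lemma expand:
  assumes "psurj V S" "pinj V S" "v \<in> V"
  shows "v = (\<Sum>s\<in>S. fscale (v s) (sysv S s))"
proof (rule pinj_eq[OF assms(2) assms(3)])
  show "(\<Sum>s\<in>S. fscale (v s) (sysv S s)) \<in> V" by (intro lc_sum sysv assms)
  show "\<forall>s\<in>S. v s = (\<Sum>s\<in>S. fscale (v s) (sysv S s)) s"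
    by (simp add: fsum_apply sysv[OF assms(1)] sum_delta_S)
qed

lemma sysv_inj: "psurj V S \<Longrightarrow> inj_on (sysv S) S"
proof (rule inj_onI)
  fix s s' assume "psurj V S" "s \<in> S" "s' \<in> S" "sysv S s = sysv S s'"
  then have "sysv S s s = sysv S s' s" by simp
  then show "s = s'" using sysv(2)[OF \<open>psurj V S\<close>] \<open>s \<in> S\<close> by (auto split: if_splits)
qed

lemma code_dim_info:
  assumes "psurj V S" "pinj V S"
  shows "code_dim V = card S"
proof -
  interpret vector_space "fscale :: 'a \<Rightarrow> ('n \<Rightarrow> 'a) \<Rightarrow> _" by (rule vs_fscale)
  define B where "B = sysv S ` S"
  have "dim V = card S"
  proof (rule dim_unique[of B])
    show "B \<subseteq> V" unfolding B_def using sysv(1)[OF assms(1)] by auto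
    show "V \<subseteq> span B"
    proof
      fix v assume "v \<in> V"
      then have "v = (\<Sum>s\<in>S. fscale (v s) (sysv S s))" by (rule expand[OF assms])
      also have "\<dots> \<in> span B" unfolding B_def by (intro span_sum span_scale span_base) auto
      finally show "v \<in> span B" .
    qed
    show "card B = card S" unfolding B_def by (rule card_image[OF sysv_inj[OF assms(1)]])
    show "independent B"
      unfolding independent_explicit_module
    proof (intro allI impI)
      fix t u w assume t: "finite t" "t \<subseteq> B" and s0: "(\<Sum>v\<in>t. fscale (u v) v) = 0" and w: "w \<in> t"
      obtain s where s: "s \<in> S" "w = sysv S s" using t w unfolding B_def by auto
      have "0 = (\<Sum>v\<in>t. fscale (u v) v) s" using s0 by simp
      also have "\<dots> = (\<Sum>v\<in>t. if v = w then u v else 0)"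
        unfolding sum_fun_apply
      proof (rule sum.cong[OF refl])
        fix v assume "v \<in> t"
        then obtain s' where s': "s' \<in> S" "v = sysv S s'" using t unfolding B_def by auto
        have "v = w \<longleftrightarrow> s' = s" using sysv_inj[OF assms(1)] s s' by (auto dest: inj_onD)
        then show "fscale (u v) v s = (if v = w then u v else 0)"
          using sysv(2)[OF assms(1) \<open>s \<in> S\<close>, of s'] s' by (auto simp: fscale_apply)
      qed
      also have "\<dots> = u w" using w t by simp
      finally show "u w = 0" by simp
    qed
  qed
  then show ?thesis unfolding code_dim_def .
qed

lemma param_bij:
  assumes "psurj V S" "pinj V S"
  shows "bij_betw (\<lambda>a. \<Sum>s\<in>S. fscale (a s) (sysv S s)) (supp_set S) V"
proof (rule bij_betw_byWitness[where f' = "\<lambda>v j. if j \<in> S then v j else 0"])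
  have ev: "(\<Sum>s\<in>S. fscale (a s) (sysv S s)) t = a t" if "t \<in> S" for a t
    using that by (simp add: fsum_apply sysv[OF assms(1)] sum_delta_S)
  show "\<forall>a\<in>supp_set S. (\<lambda>j. if j \<in> S then (\<Sum>s\<in>S. fscale (a s) (sysv S s)) j else 0) = a"
  proof (intro ballI ext)
    fix a :: "'n \<Rightarrow> 'a" and j assume a: "a \<in> supp_set S"
    show "(if j \<in> S then (\<Sum>s\<in>S. fscale (a s) (sysv S s)) j else 0) = a j"
    proof (cases "j \<in> S")
      case True then show ?thesis using ev[OF True, of a] by simp
    next
      case False then show ?thesis using a unfolding supp_set_def by simp
    qed
  qed
  show "\<forall>v\<in>V. (\<Sum>s\<in>S. fscale ((\<lambda>j. if j \<in> S then v j else 0) s) (sysv S s)) = v"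
  proof
    fix v assume v: "v \<in> V"
    have "(\<Sum>s\<in>S. fscale ((\<lambda>j. if j \<in> S then v j else 0) s) (sysv S s)) =
          (\<Sum>s\<in>S. fscale (v s) (sysv S s))"
      by (rule sum.cong) simp_all
    also have "\<dots> = v" using expand[OF assms v] by simp
    finally show "(\<Sum>s\<in>S. fscale ((\<lambda>j. if j \<in> S then v j else 0) s) (sysv S s)) = v" .
  qed
  show "(\<lambda>a. \<Sum>s\<in>S. fscale (a s) (sysv S s)) ` supp_set S \<subseteq> V"
  proof
    fix w assume "w \<in> (\<lambda>a. \<Sum>s\<in>S. fscale (a s) (sysv S s)) ` supp_set S"
    then obtain a where "w = (\<Sum>s\<in>S. fscale (a s) (sysv S s))" by blast
    moreover have "(\<Sum>s\<in>S. fscale (a s) (sysv S s)) \<in> V"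
      by (rule lc_sum) (rule sysv(1)[OF assms(1)])
    ultimately show "w \<in> V" by simp
  qed
  show "(\<lambda>v j. if j \<in> S then v j else 0) ` V \<subseteq> supp_set S"
    by (auto simp: supp_set_def)
qed

end


lemma card_supp_set: "card (supp_set P :: ('n::finite \<Rightarrow> 'a::{finite,field}) set) = CARD('a) ^ card P"
proof -
  have "bij_betw (\<lambda>a. restrict a P) (supp_set P) (PiE P (\<lambda>_. (UNIV :: 'a set)))"
    by (rule bij_betw_byWitness[where f' = "\<lambda>e j. if j \<in> P then e j else 0"])
       (auto simp: supp_set_def fun_eq_iff PiE_def extensional_def)
  then have "card (supp_set P :: ('n \<Rightarrow> 'a) set) = card (PiE P (\<lambda>_. (UNIV :: 'a set)))"
    by (rule bij_betw_same_card)
  also have "\<dots> = CARD('a) ^ card P" by (simp add: card_PiE)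
  finally show ?thesis .
qed

lemma lc_dual: "linear_code (dual_code (C :: ('n::finite \<Rightarrow> 'a::{finite,field}) set))"
  unfolding lc_unfold dual_code_def
proof (intro conjI ballI allI CollectI)
  fix y show "(\<Sum>j\<in>UNIV. (0::'n \<Rightarrow> 'a) j * y j) = 0" by simp
next
  fix x x' y
  assume x: "x \<in> {x. \<forall>y\<in>C. (\<Sum>j\<in>UNIV. x j * y j) = 0}" and x': "x' \<in> {x. \<forall>y\<in>C. (\<Sum>j\<in>UNIV. x j * y j) = 0}"
    and y: "y \<in> C"
  have "(\<Sum>j\<in>UNIV. (x + x') j * y j) = (\<Sum>j\<in>UNIV. x j * y j) + (\<Sum>j\<in>UNIV. x' j * y j)"
    by (simp add: distrib_right sum.distrib)
  then show "(\<Sum>j\<in>UNIV. (x + x') j * y j) = 0" using x x' y by simp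
next
  fix c x y
  assume x: "x \<in> {x. \<forall>y\<in>C. (\<Sum>j\<in>UNIV. x j * y j) = 0}" and y: "y \<in> C"
  have "(\<Sum>j\<in>UNIV. fscale c x j * y j) = c * (\<Sum>j\<in>UNIV. x j * y j)"
    by (simp add: fscale_apply sum_distrib_left mult.assoc)
  then show "(\<Sum>j\<in>UNIV. fscale c x j * y j) = 0" using x y by simp
qed

lemma dual_info:
  fixes C :: "('n::finite \<Rightarrow> 'a::{finite,field}) set"
  assumes lc: "linear_code C" and S: "psurj C S" "pinj C S"
  shows "psurj (dual_code C) (- S) \<and> pinj (dual_code C) (- S)"
proof -
  let ?h = "sysv C S"
  have split: "(\<Sum>j\<in>UNIV. x j * ?h s j) = x s + (\<Sum>j\<in>- S. x j * ?h s j)" if "s \<in> S" for x s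
  proof -
    have "(\<Sum>j\<in>UNIV. x j * ?h s j) = (\<Sum>j\<in>S \<union> - S. x j * ?h s j)" by simp
    also have "\<dots> = (\<Sum>j\<in>S. x j * ?h s j) + (\<Sum>j\<in>- S. x j * ?h s j)"
      by (rule sum.union_disjoint) auto
    also have "(\<Sum>j\<in>S. x j * ?h s j) = x s"
    proof -
      have "(\<Sum>j\<in>S. x j * ?h s j) = (\<Sum>j\<in>S. if j = s then x j else 0)"
        by (rule sum.cong) (use sysv(2)[OF lc S(1)] in auto)
      then show ?thesis using that by simp
    qed
    finally show ?thesis .
  qed
  have dual_iff: "x \<in> dual_code C \<longleftrightarrow> (\<forall>s\<in>S. (\<Sum>j\<in>UNIV. x j * ?h s j) = 0)" for x
  proof
    assume "x \<in> dual_code C" then show "\<forall>s\<in>S. (\<Sum>j\<in>UNIV. x j * ?h s j) = 0"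
      using sysv(1)[OF lc S(1)] unfolding dual_code_def by blast
  next
    assume h: "\<forall>s\<in>S. (\<Sum>j\<in>UNIV. x j * ?h s j) = 0"
    show "x \<in> dual_code C" unfolding dual_code_def
    proof (intro CollectI ballI)
      fix y assume "y \<in> C"
      then have yeq: "y = (\<Sum>s\<in>S. fscale (y s) (?h s))" by (rule expand[OF lc S])
      have yj: "y j = (\<Sum>s\<in>S. y s * ?h s j)" for j
      proof -
        have "y j = (\<Sum>s\<in>S. fscale (y s) (?h s)) j" using yeq by (rule fun_cong)
        then show ?thesis by (simp only: fsum_apply[OF lc])
      qed
      have "(\<Sum>j\<in>UNIV. x j * y j) = (\<Sum>j\<in>UNIV. x j * (\<Sum>s\<in>S. y s * ?h s j))"
        by (rule sum.cong[OF refl]) (subst yj, rule refl)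
      also have "\<dots> = (\<Sum>j\<in>UNIV. \<Sum>s\<in>S. y s * (x j * ?h s j))"
        by (simp add: sum_distrib_left mult.left_commute)
      also have "\<dots> = (\<Sum>s\<in>S. \<Sum>j\<in>UNIV. y s * (x j * ?h s j))"
        by (rule sum.swap)
      also have "\<dots> = (\<Sum>s\<in>S. y s * (\<Sum>j\<in>UNIV. x j * ?h s j))"
        by (simp add: sum_distrib_left)
      also have "\<dots> = 0" using h by simp
      finally show "(\<Sum>j\<in>UNIV. x j * y j) = 0" .
    qed
  qed
  have "pinj (dual_code C) (- S)" unfolding pinj_def
  proof (intro ballI impI)
    fix x assume x: "x \<in> dual_code C" "\<forall>s\<in>- S. x s = 0"
    show "x = 0"
    proof
      fix s show "x s = 0 s"
      proof (cases "s \<in> S")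
        case True
        then have "(\<Sum>j\<in>UNIV. x j * ?h s j) = 0" using x dual_iff by blast
        then show ?thesis using split[OF True, of x] x(2) by simp
      qed (use x in auto)
    qed
  qed
  moreover have "psurj (dual_code C) (- S)" unfolding psurj_def
  proof
    fix y
    define x where "x j = (if j \<in> S then - (\<Sum>t\<in>- S. y t * ?h j t) else y j)" for j
    have "x \<in> dual_code C" unfolding dual_iff
    proof
      fix s assume s: "s \<in> S"
      have "(\<Sum>j\<in>- S. x j * ?h s j) = (\<Sum>j\<in>- S. y j * ?h s j)"
        by (rule sum.cong) (auto simp: x_def)
      then show "(\<Sum>j\<in>UNIV. x j * ?h s j) = 0" unfolding split[OF s] using s by (simp add: x_def)
    qed
    moreover have "\<forall>s\<in>- S. x s = y s" by (simp add: x_def)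
    ultimately show "\<exists>x\<in>dual_code C. \<forall>s\<in>- S. x s = y s" by blast
  qed
  ultimately show ?thesis by blast
qed


fun spread :: "'a::field \<Rightarrow> 'n \<Rightarrow> ('n \<Rightarrow> 'a) \<Rightarrow> 'n list \<Rightarrow> ('n, 'a) gate list" where
  "spread c s \<gamma> [] = [MulG (1 / c) s]"
| "spread c s \<gamma> (t # ts) = MulG (\<gamma> t / c) s # AddG s t # spread (\<gamma> t) s \<gamma> ts"

definition block :: "'n \<Rightarrow> ('n \<Rightarrow> 'a::field) \<Rightarrow> 'n list \<Rightarrow> ('n, 'a) gate list" where
  "block s \<gamma> ts = (if ts = [] then [] else spread 1 s \<gamma> ts)"

lemma spread_cl:
  assumes "c \<noteq> 0" "\<forall>t\<in>set ts. \<gamma> t \<noteq> 0" "s \<notin> set ts" "distinct ts"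
  shows "fold cl (spread c s \<gamma> ts) (x(s := c * v)) =
         (\<lambda>j. if j \<in> set ts then x j + \<gamma> j * v else x j)(s := v)"
  using assms
proof (induction ts arbitrary: c x)
  case Nil
  then show ?case by (simp add: fun_eq_iff)
next
  case (Cons t ts)
  have ts: "t \<noteq> s" using Cons.prems by auto
  define x' where "x' = x(t := x t + \<gamma> t * v)"
  have step: "cl (AddG s t) (cl (MulG (\<gamma> t / c) s) (x(s := c * v))) = x'(s := \<gamma> t * v)"
    using Cons.prems ts by (auto simp: fun_eq_iff x'_def)
  have "fold cl (spread c s \<gamma> (t # ts)) (x(s := c * v)) = fold cl (spread (\<gamma> t) s \<gamma> ts) (x'(s := \<gamma> t * v))"
    using step by simp
  also have "\<dots> = (\<lambda>j. if j \<in> set ts then x' j + \<gamma> j * v else x' j)(s := v)"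
    by (rule Cons.IH) (use Cons.prems in auto)
  also have "\<dots> = (\<lambda>j. if j \<in> set (t # ts) then x j + \<gamma> j * v else x j)(s := v)"
    using Cons.prems by (auto simp: fun_eq_iff x'_def)
  finally show ?case .
qed

lemma block_cl:
  assumes "\<forall>t\<in>set ts. \<gamma> t \<noteq> 0" "s \<notin> set ts" "distinct ts"
  shows "fold cl (block s \<gamma> ts) x = (\<lambda>j. if j \<in> set ts then x j + \<gamma> j * x s else x j)"
proof (cases "ts = []")
  case True then show ?thesis by (simp add: block_def)
next
  case False
  have "fold cl (block s \<gamma> ts) x = fold cl (spread 1 s \<gamma> ts) (x(s := 1 * x s))"
    using False by (simp add: block_def)
  also have "\<dots> = (\<lambda>j. if j \<in> set ts then x j + \<gamma> j * x s else x j)(s := x s)"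
    by (rule spread_cl) (use assms in auto)
  also have "\<dots> = (\<lambda>j. if j \<in> set ts then x j + \<gamma> j * x s else x j)"
    using assms by (auto simp: fun_eq_iff)
  finally show ?thesis .
qed

lemma spread_counts:
  "length (filter is_add (spread c s \<gamma> ts)) = length ts"
  "length (filter is_mul (spread c s \<gamma> ts)) = Suc (length ts)"
  "filter is_fourier (spread c s \<gamma> ts) = []"
  by (induction ts arbitrary: c) auto

lemma spread_wf:
  "c \<noteq> 0 \<Longrightarrow> \<forall>t\<in>set ts. \<gamma> t \<noteq> 0 \<Longrightarrow> s \<notin> set ts \<Longrightarrow> \<forall>g\<in>set (spread c s \<gamma> ts). wf_gate g"
  by (induction ts arbitrary: c) auto

lemma block_counts:
  "length (filter is_add (block s \<gamma> ts)) = length ts"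
  "length (filter is_mul (block s \<gamma> ts)) = (if ts = [] then 0 else Suc (length ts))"
  "length (filter is_fourier (block s \<gamma> ts)) = 0"
  by (auto simp: block_def spread_counts)

lemma block_wf:
  "\<forall>t\<in>set ts. \<gamma> t \<noteq> 0 \<Longrightarrow> s \<notin> set ts \<Longrightarrow> \<forall>g\<in>set (block s \<gamma> ts). wf_gate g"
  unfolding block_def using spread_wf[of 1 ts \<gamma> s] by auto

definition phase :: "('n \<Rightarrow> 'n \<Rightarrow> 'a::field) \<Rightarrow> ('n \<Rightarrow> 'n list) \<Rightarrow> 'n list \<Rightarrow> ('n, 'a) gate list" where
  "phase G T ss = concat (map (\<lambda>s. block s (G s) (T s)) ss)"

definition pvec :: "('n \<Rightarrow> 'n \<Rightarrow> 'a::field) \<Rightarrow> ('n \<Rightarrow> 'n list) \<Rightarrow> 'n \<Rightarrow> ('n \<Rightarrow> 'a)" where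
  "pvec G T s = (\<lambda>j. if j \<in> set (T s) then G s j else 0)"

lemma phase_cl:
  fixes G :: "'n::finite \<Rightarrow> 'n \<Rightarrow> 'a::{finite,field}"
  assumes "distinct ss" "set ss \<subseteq> Z"
    "\<forall>s\<in>set ss. set (T s) \<inter> Z = {} \<and> distinct (T s) \<and> (\<forall>t\<in>set (T s). G s t \<noteq> 0)"
  shows "fold cl (phase G T ss) x = x + (\<Sum>s\<in>set ss. fscale (x s) (pvec G T s))"
  using assms
proof (induction ss arbitrary: x)
  case Nil then show ?case by (simp add: phase_def)
next
  case (Cons s ss)
  have sZ: "s \<in> Z" using Cons.prems by auto
  have Ts: "set (T s) \<inter> Z = {}" "distinct (T s)" "\<forall>t\<in>set (T s). G s t \<noteq> 0" using Cons.prems by auto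
  define x' where "x' = fold cl (block s (G s) (T s)) x"
  have x': "x' = x + fscale (x s) (pvec G T s)"
  proof
    fix j
    have "x' j = (if j \<in> set (T s) then x j + G s j * x s else x j)"
      unfolding x'_def by (subst block_cl) (use Ts sZ in auto)
    then show "x' j = (x + fscale (x s) (pvec G T s)) j"
      by (simp add: fscale_apply pvec_def)
  qed
  have agree: "x' j = x j" if "j \<in> Z" for j
    using that Ts unfolding x' by (auto simp: fscale_apply pvec_def)
  have "fold cl (phase G T (s # ss)) x = fold cl (phase G T ss) x'"
    by (simp add: phase_def x'_def)
  also have "\<dots> = x' + (\<Sum>s'\<in>set ss. fscale (x' s') (pvec G T s'))"
    by (rule Cons.IH) (use Cons.prems in auto)
  also have "(\<Sum>s'\<in>set ss. fscale (x' s') (pvec G T s')) = (\<Sum>s'\<in>set ss. fscale (x s') (pvec G T s'))"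
    by (rule sum.cong[OF refl]) (use agree Cons.prems in auto)
  also have "x' + (\<Sum>s'\<in>set ss. fscale (x s') (pvec G T s')) =
             x + (\<Sum>s'\<in>set (s # ss). fscale (x s') (pvec G T s'))"
    using Cons.prems by (simp add: x' add.assoc)
  finally show ?case .
qed

lemma length_filter_concat: "length (filter P (concat xs)) = (\<Sum>x\<leftarrow>xs. length (filter P x))"
  by (induction xs) auto

lemma phase_counts:
  "length (filter is_add (phase G T ss)) = (\<Sum>s\<leftarrow>ss. length (T s))"
  "length (filter is_mul (phase G T ss)) = (\<Sum>s\<leftarrow>ss. if T s = [] then 0 else Suc (length (T s)))"
  "length (filter is_fourier (phase G T ss)) = 0"
  unfolding phase_def length_filter_concat by (simp_all add: block_counts o_def)

lemma phase_wf:
  "\<forall>s\<in>set ss. s \<notin> set (T s) \<and> (\<forall>t\<in>set (T s). G s t \<noteq> 0) \<Longrightarrow> \<forall>g\<in>set (phase G T ss). wf_gate g"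
  unfolding phase_def using block_wf by fastforce

lemma phase_nofourier: "\<forall>g\<in>set (phase G T ss). \<not> is_fourier g"
proof -
  have "filter is_fourier (phase G T ss) = []" using phase_counts(3)[of G T ss] by simp
  then show ?thesis by (metis filter_empty_conv)
qed

lemma perm_circuit:
  fixes gs :: "('n::finite, 'a::{finite,field}) gate list"
  assumes "\<forall>g\<in>set gs. \<not> is_fourier g"
  shows "circuit_op gs (ket x) = ket (fold cl gs x)"
  using assms
proof (induction gs arbitrary: x)
  case Nil then show ?case by simp
next
  case (Cons g gs)
  have "circuit_op (g # gs) (ket x) = circuit_op gs (ket (cl g x))"
    using Cons.prems by (simp add: apply_gate_ket gate_ket_cl)
  also have "\<dots> = ket (fold cl gs (cl g x))" by (rule Cons.IH) (use Cons.prems in auto)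
  finally show ?case by simp
qed

definition cq :: "'a::finite itself \<Rightarrow> complex" where
  "cq _ = 1 / complex_of_real (sqrt (real CARD('a)))"

lemma fourier_ket0:
  fixes x :: "'n \<Rightarrow> 'a::{finite,field}"
  assumes "x a = 0"
  shows "gate_ket (FourierG a) x = (\<Sum>z\<in>UNIV. cscale (cq TYPE('a)) (ket (x(a := z))))"
  using assms by (simp add: tr_nat_zero cq_def)

lemma cscale_sum: "cscale c (\<Sum>i\<in>A. f i) = (\<Sum>i\<in>A. cscale c (f i))"
  by (rule ext) (simp add: sum_fun_apply sum_distrib_left)

lemma cscale_cscale: "cscale a (cscale b \<psi>) = cscale (a * b) \<psi>"
  by (rule ext) (simp add: mult.assoc)

lemma cscale_one: "cscale 1 \<psi> = \<psi>"
  by (rule ext) simp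

lemma supp_set_empty: "supp_set {} = {0}"
  by (auto simp: supp_set_def fun_eq_iff)

lemma supp_insert_reindex:
  fixes x :: "'n::finite \<Rightarrow> 'a::{finite,field}"
  assumes "p \<notin> P" "x p = 0"
  shows "(\<Sum>z\<in>UNIV. \<Sum>a\<in>supp_set P. f (x(p := z) + a)) = (\<Sum>a\<in>supp_set (insert p P). f (x + a))"
proof -
  have "(\<Sum>z\<in>UNIV. \<Sum>a\<in>supp_set P. f (x(p := z) + a)) = (\<Sum>(z, a)\<in>UNIV \<times> supp_set P. f (x(p := z) + a))"
    by (rule sum.cartesian_product)
  also have "\<dots> = (\<Sum>a\<in>supp_set (insert p P). f (x + a))"
  proof (rule sum.reindex_bij_witness[where i = "\<lambda>a'. (a' p, a'(p := 0))" and j = "\<lambda>(z, a). a(p := z)"])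
    fix za :: "'a \<times> ('n \<Rightarrow> 'a)" assume za: "za \<in> UNIV \<times> supp_set P"
    obtain z a where zaz: "za = (z, a)" by (cases za)
    have ap: "a p = 0" using za assms(1) unfolding zaz supp_set_def by auto
    show "(\<lambda>a'. (a' p, a'(p := 0))) ((\<lambda>(z, a). a(p := z)) za) = za"
      unfolding zaz using ap by (auto simp: fun_eq_iff)
    show "(\<lambda>(z, a). a(p := z)) za \<in> supp_set (insert p P)"
      using za unfolding zaz supp_set_def by auto
    show "f (x + (\<lambda>(z, a). a(p := z)) za) = (case za of (z, a) \<Rightarrow> f (x(p := z) + a))"
    proof -
      have "x + a(p := z) = x(p := z) + a" using ap assms(2) by (auto simp: fun_eq_iff)
      then show ?thesis unfolding zaz by simp
    qed
  next
    fix a' :: "'n \<Rightarrow> 'a" assume a': "a' \<in> supp_set (insert p P)"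
    show "(\<lambda>(z, a). a(p := z)) (a' p, a'(p := 0)) = a'" by (auto simp: fun_eq_iff)
    show "(a' p, a'(p := 0)) \<in> UNIV \<times> supp_set P" using a' unfolding supp_set_def by auto
  qed
  finally show ?thesis .
qed

lemma fourier_phase:
  fixes x :: "'n::finite \<Rightarrow> 'a::{finite,field}"
  assumes "distinct ps" "\<forall>p\<in>set ps. x p = 0"
  shows "circuit_op (map FourierG ps) (ket x) =
         cscale (cq TYPE('a) ^ length ps) (\<Sum>a\<in>supp_set (set ps). ket (x + a))"
  using assms
proof (induction ps arbitrary: x)
  case Nil then show ?case by (simp add: supp_set_empty cscale_one)
next
  case (Cons p ps)
  have xp: "x p = 0" using Cons.prems by simp
  have pps: "p \<notin> set ps" using Cons.prems by simp
  have "circuit_op (map FourierG (p # ps)) (ket x) =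
        circuit_op (map FourierG ps) (\<Sum>z\<in>UNIV. cscale (cq TYPE('a)) (ket (x(p := z))))"
    by (simp add: apply_gate_ket fourier_ket0[of x p, OF xp] del: gate_ket.simps)
  also have "\<dots> = (\<Sum>z\<in>UNIV. cscale (cq TYPE('a)) (circuit_op (map FourierG ps) (ket (x(p := z)))))"
    by (rule linear_sum'[OF linear_circuit])
  also have "\<dots> = (\<Sum>z\<in>UNIV. cscale (cq TYPE('a))
       (cscale (cq TYPE('a) ^ length ps) (\<Sum>a\<in>supp_set (set ps). ket (x(p := z) + a))))"
  proof (rule sum.cong[OF refl])
    fix z
    have "circuit_op (map FourierG ps) (ket (x(p := z))) =
          cscale (cq TYPE('a) ^ length ps) (\<Sum>a\<in>supp_set (set ps). ket (x(p := z) + a))"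
      by (rule Cons.IH) (use Cons.prems pps in auto)
    then show "cscale (cq TYPE('a)) (circuit_op (map FourierG ps) (ket (x(p := z)))) =
      cscale (cq TYPE('a)) (cscale (cq TYPE('a) ^ length ps) (\<Sum>a\<in>supp_set (set ps). ket (x(p := z) + a)))"
      by simp
  qed
  also have "\<dots> = cscale (cq TYPE('a) ^ length (p # ps))
       (\<Sum>z\<in>UNIV. \<Sum>a\<in>supp_set (set ps). ket (x(p := z) + a))"
    by (simp add: cscale_cscale cscale_sum[symmetric] mult.commute)
  also have "(\<Sum>z\<in>UNIV. \<Sum>a\<in>supp_set (set ps). ket (x(p := z) + a)) =
             (\<Sum>a\<in>supp_set (set (p # ps)). ket (x + a))"
    using supp_insert_reindex[of p "set ps" x ket, OF pps xp] by simp
  finally show ?case .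
qed


lemma D2: "2 * ((K + 1) choose 2) = (K + 1) * (K::nat)"
proof -
  have "(K + 1) choose 2 = (K + 1) * K div 2" by (simp add: choose_two)
  moreover have "even ((K + 1) * K)" by simp
  ultimately show ?thesis by simp
qed

lemma arith_add:
  fixes r k e :: nat
  shows "k * e + r * (k + e) \<le> (r + k) * (r + k + e) - ((r + k + 1) choose 2)"
proof -
  define D where "D = (r + k + 1) choose 2"
  have d: "2 * D = (r + k + 1) * (r + k)" unfolding D_def by (rule D2)
  have r: "r \<le> r * r" and k: "k \<le> k * k" by (simp_all add: le_square)
  have "2 * (k * e + r * (k + e) + D) \<le> 2 * ((r + k) * (r + k + e))"
    using d by (simp add: algebra_simps; use r k in linarith)
  then have "k * e + r * (k + e) + D \<le> (r + k) * (r + k + e)" by simp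
  then show ?thesis unfolding D_def by simp
qed

lemma arith_mul:
  fixes r k e :: nat
  shows "k * (if e = 0 then 0 else Suc e) + r * (if k + e = 0 then 0 else Suc (k + e))
         \<le> ((r + k) * (r + k + e) - ((r + k + 1) choose 2)) + (r + k + e - 1)"
proof -
  define D where "D = (r + k + 1) choose 2"
  have d: "2 * D = (r + k + 1) * (r + k)" unfolding D_def by (rule D2)
  have r: "r \<le> r * r" and k: "k \<le> k * k" by (simp_all add: le_square)
  have Dle: "D \<le> (r + k) * (r + k + e)"
  proof -
    have "2 * D \<le> 2 * ((r + k) * (r + k + e))" using d by (simp add: algebra_simps; use r k in linarith)
    then show ?thesis by simp
  qed
  show ?thesis
  proof (cases "e = 0")
    case False
    have "2 * (k * Suc e + r * Suc (k + e) + D) \<le> 2 * ((r + k) * (r + k + e) + (r + k + e - 1))"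
      using d False by (simp add: algebra_simps; use r k in linarith)
    then have "k * Suc e + r * Suc (k + e) + D \<le> (r + k) * (r + k + e) + (r + k + e - 1)" by simp
    then show ?thesis using False Dle unfolding D_def[symmetric] by simp
  next
    case True
    show ?thesis
    proof (cases "k = 0")
      case True
      then show ?thesis using \<open>e = 0\<close> by simp
    next
      case False
      have "2 * (r * Suc k + D) \<le> 2 * ((r + k) * (r + k) + (r + k - 1))"
        using d False by (simp add: algebra_simps; use r k in linarith)
      then have "r * Suc k + D \<le> (r + k) * (r + k) + (r + k - 1)" by simp
      then show ?thesis using False \<open>e = 0\<close> Dle unfolding D_def[symmetric] by simp
    qed
  qed
qed


lemma card_Compl': "card (- (S :: 'n::finite set)) = CARD('n) - card S"
proof -
  have "- S = UNIV - S" by auto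
  then show ?thesis by (simp add: card_Diff_subset)
qed

lemma sum_list_bound: "(\<forall>x\<in>set xs. f x \<le> (B::nat)) \<Longrightarrow> (\<Sum>x\<leftarrow>xs. f x) \<le> length xs * B"
  by (induction xs) auto

lemma mm_bound: "length T \<le> L \<Longrightarrow> (if T = [] then 0 else Suc (length T)) \<le> (if L = 0 then 0 else Suc L)"
  by (cases T) auto

lemma filter_map_fourier:
  "filter is_fourier (map FourierG ps) = map FourierG ps"
  "filter is_add (map FourierG ps) = []"
  "filter is_mul (map FourierG ps) = []"
  by (induction ps) auto

lemma css_shift:
  fixes C2 :: "('n::finite \<Rightarrow> 'a::{finite,field}) set"
  assumes "c \<in> dual_code C2"
  shows "css_state C2 (c + w) = css_state C2 w"
proof -
  have lcD: "linear_code (dual_code C2)" by (rule lc_dual)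
  have "(\<Sum>c'\<in>dual_code C2. ket (c' + (c + w))) = (\<Sum>c'\<in>dual_code C2. ket (c' + w))"
  proof (rule sum.reindex_bij_witness[where j = "\<lambda>c'. c' + c" and i = "\<lambda>c'. c' - c"])
    fix a assume "a \<in> dual_code C2"
    then show "a + c - c = a" "a + c \<in> dual_code C2" "ket (a + c + w) = ket (a + (c + w))"
      using lc_add[OF lcD _ assms] by (auto simp: add.assoc)
  next
    fix b assume "b \<in> dual_code C2"
    then show "b - c + c = b" "b - c \<in> dual_code C2"
      using lc_diff[OF lcD _ assms] by auto
  qed
  then show ?thesis unfolding css_state_def by simp
qed

theorem proposition1:
  fixes C1 C2 :: "('n::finite \<Rightarrow> 'a::{finite,field}) set"
    and k1 k2 :: nat
  assumes "linear_code C1" and "linear_code C2"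
    and "code_dim C1 = k1" and "code_dim C2 = k2"
    and "dual_code C2 \<subseteq> C1"
  shows "\<exists>(gs :: ('n, 'a) gate list) (I :: 'n set).
           (let n = CARD('n); k = k1 + k2 - n; A = k1 * n - ((k1 + 1) choose 2) in
             card I = k \<and>
             (\<forall>g\<in>set gs. wf_gate g) \<and>
             unitary_op (circuit_op gs) \<and>
             circuit_op gs ` qspan {ket x | x. \<forall>j. j \<notin> I \<longrightarrow> x j = 0} = css_code C1 C2 \<and>
             length (filter is_fourier gs) = n - k2 \<and>
             length (filter is_add gs) \<le> A \<and>
             length (filter is_mul gs) \<le> A + (n - 1))"
proof -
  let ?n = "CARD('n)"
  have psE: "psurj C2 {}" unfolding psurj_def using lc_zero[OF assms(2)] by blast
  obtain S2 where S2: "psurj C2 S2" "pinj C2 S2" using info_extend[OF assms(2) psE] by blast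
  have k2: "card S2 = k2" using code_dim_info[OF assms(2) S2] assms(4) by simp
  define D where "D = dual_code C2"
  define P where "P = - S2"
  have lcD: "linear_code D" unfolding D_def by (rule lc_dual)
  have DP: "psurj D P" "pinj D P" using dual_info[OF assms(2) S2] unfolding D_def P_def by auto
  have cardP: "card P = ?n - k2" unfolding P_def using k2 by (simp add: card_Compl')
  have C1P: "psurj C1 P" using DP(1) assms(5) unfolding psurj_def D_def by blast
  obtain S where S: "P \<subseteq> S" "psurj C1 S" "pinj C1 S" using info_extend[OF assms(1) C1P] by blast
  have k1: "card S = k1" using code_dim_info[OF assms(1) S(2,3)] assms(3) by simp
  define I where "I = S - P"
  have k2n: "k2 \<le> ?n" using k2 card_mono[of UNIV S2] by simp
  have cardSPI: "card S = card P + card I"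
    unfolding I_def using card_Diff_subset[OF _ S(1)] card_mono[OF _ S(1)] by simp
  have cardI: "card I = k1 + k2 - ?n" using cardSPI k1 cardP k2n by simp
  have IP: "I \<inter> P = {}" "I \<subseteq> S" unfolding I_def by auto
  define g where "g = sysv C1 S"
  define h where "h = sysv D P"
  have gsys: "g i t = (if t = i then 1 else 0)" if "t \<in> S" for i t
    unfolding g_def using sysv(2)[OF assms(1) S(2) that] .
  have hsys: "h p t = (if t = p then 1 else 0)" if "t \<in> P" for p t
    unfolding h_def using sysv(2)[OF lcD DP(1) that] .
  have gC1: "g i \<in> C1" for i unfolding g_def by (rule sysv(1)[OF assms(1) S(2)])
  have hD: "h p \<in> D" for p unfolding h_def by (rule sysv(1)[OF lcD DP(1)])
  obtain ps where ps: "set ps = P" "distinct ps" using finite_distinct_list[of P] by auto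
  obtain il where il: "set il = I" "distinct il" using finite_distinct_list[of I] by auto
  obtain lS where lS: "set lS = - S" "distinct lS" using finite_distinct_list[of "- S"] by auto
  obtain lP where lP: "set lP = - P" "distinct lP" using finite_distinct_list[of "- P"] by auto
  define T1 where "T1 i = filter (\<lambda>t. g i t \<noteq> 0) lS" for i
  define T2 where "T2 p = filter (\<lambda>t. h p t \<noteq> 0) lP" for p
  define perm where "perm = phase g T1 il @ phase h T2 ps"
  define gs where "gs = map FourierG ps @ perm"
  have T1s: "set (T1 i) = {t. t \<notin> S \<and> g i t \<noteq> 0}" for i unfolding T1_def using lS by auto
  have T2s: "set (T2 p) = {t. t \<notin> P \<and> h p t \<noteq> 0}" for p unfolding T2_def using lP by auto
  have dT1: "distinct (T1 i)" for i unfolding T1_def using lS(2) by simp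
  have dT2: "distinct (T2 p)" for p unfolding T2_def using lP(2) by simp

  have wf: "\<forall>g\<in>set gs. wf_gate g"
  proof -
    have "\<forall>g\<in>set (phase g T1 il). wf_gate g"
      by (rule phase_wf) (use il IP T1s in auto)
    moreover have "\<forall>g\<in>set (phase h T2 ps). wf_gate g"
      by (rule phase_wf) (use ps T2s in auto)
    ultimately show ?thesis unfolding gs_def perm_def by auto
  qed
  have unit: "unitary_op (circuit_op gs)" by (rule unitary_circuit[OF wf])

  define e where "e = ?n - k1"
  have ne: "?n = card P + card I + e"
  proof -
    have "card S \<le> ?n" by (rule card_mono) auto
    then show ?thesis unfolding e_def using cardSPI k1 by simp
  qed
  have lenT1: "length (T1 i) \<le> e" for i
  proof -
    have "length (T1 i) \<le> length lS" unfolding T1_def by (rule length_filter_le)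
    also have "length lS = e" using distinct_card[OF lS(2)] lS(1) card_Compl'[of S] k1 e_def by simp
    finally show ?thesis .
  qed
  have lenT2: "length (T2 p) \<le> card I + e" for p
  proof -
    have "length (T2 p) \<le> length lP" unfolding T2_def by (rule length_filter_le)
    also have "length lP = card I + e" using distinct_card[OF lP(2)] lP(1) card_Compl'[of P] ne by simp
    finally show ?thesis .
  qed
  have nF: "length (filter is_fourier gs) = ?n - k2"
    unfolding gs_def perm_def using distinct_card[OF ps(2)] ps(1) cardP
    by (simp add: phase_counts(3) filter_map_fourier(1))
  have addc: "length (filter is_add gs) = (\<Sum>i\<leftarrow>il. length (T1 i)) + (\<Sum>p\<leftarrow>ps. length (T2 p))"
    unfolding gs_def perm_def by (simp add: phase_counts(1) filter_map_fourier(2))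
  have mulc: "length (filter is_mul gs) = (\<Sum>i\<leftarrow>il. if T1 i = [] then 0 else Suc (length (T1 i))) +
       (\<Sum>p\<leftarrow>ps. if T2 p = [] then 0 else Suc (length (T2 p)))"
    unfolding gs_def perm_def by (simp add: phase_counts(2) filter_map_fourier(3))
  have lil: "length il = card I" using distinct_card[OF il(2)] il(1) by simp
  have lps: "length ps = card P" using distinct_card[OF ps(2)] ps(1) by simp
  have kk1: "k1 = card P + card I" using cardSPI k1 by simp
  have addb: "length (filter is_add gs) \<le> k1 * ?n - ((k1 + 1) choose 2)"
  proof -
    have "length (filter is_add gs) \<le> card I * e + card P * (card I + e)"
      unfolding addc using sum_list_bound[of il "\<lambda>i. length (T1 i)" e] sum_list_bound[of ps "\<lambda>p. length (T2 p)" "card I + e"]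
        lenT1 lenT2 lil lps by (simp add: add_mono)
    also have "\<dots> \<le> (card P + card I) * (card P + card I + e) - ((card P + card I + 1) choose 2)"
      by (rule arith_add)
    finally show ?thesis unfolding kk1 ne .
  qed
  have mulb: "length (filter is_mul gs) \<le> (k1 * ?n - ((k1 + 1) choose 2)) + (?n - 1)"
  proof -
    have "length (filter is_mul gs) \<le> card I * (if e = 0 then 0 else Suc e) +
           card P * (if card I + e = 0 then 0 else Suc (card I + e))"
      unfolding mulc
      using sum_list_bound[of il "\<lambda>i. if T1 i = [] then 0 else Suc (length (T1 i))" "if e = 0 then 0 else Suc e"]
        sum_list_bound[of ps "\<lambda>p. if T2 p = [] then 0 else Suc (length (T2 p))" "if card I + e = 0 then 0 else Suc (card I + e)"]
        mm_bound[OF lenT1] mm_bound[OF lenT2] lil lps by (simp add: add_mono)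
    also have "\<dots> \<le> ((card P + card I) * (card P + card I + e) - ((card P + card I + 1) choose 2)) + (card P + card I + e - 1)"
      by (rule arith_mul)
    finally show ?thesis unfolding kk1 ne .
  qed

  define wv where "wv b = (\<Sum>i\<in>I. fscale (b i) (g i))" for b
  have wvC1: "wv b \<in> C1" for b unfolding wv_def by (rule lc_sum[OF assms(1) gC1])
  have cls: "fold cl perm (b + a) = wv b + (\<Sum>p\<in>P. fscale (a p) (h p))"
    if b: "b \<in> supp_set I" and a: "a \<in> supp_set P" for b a
  proof -
    have b0: "b j = 0" if "j \<notin> I" for j using b that unfolding supp_set_def by auto
    have a0: "a j = 0" if "j \<notin> P" for j using a that unfolding supp_set_def by auto
    define pv1 where "pv1 = pvec g T1"
    define pv2 where "pv2 = pvec h T2"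
    have pv1: "pv1 i j = (if j \<in> S then 0 else g i j)" for i j
      unfolding pv1_def pvec_def T1s by auto
    have pv2: "pv2 p j = (if j \<in> P then 0 else h p j)" for p j
      unfolding pv2_def pvec_def T2s by auto
    define x1 where "x1 = fold cl (phase g T1 il) (b + a)"
    have x1: "x1 = (b + a) + (\<Sum>i\<in>I. fscale ((b + a) i) (pv1 i))"
      unfolding x1_def pv1_def il(1)[symmetric]
      by (rule phase_cl[where Z = S]) (use il IP T1s dT1 in auto)
    have x1p: "x1 p = a p" if "p \<in> P" for p
    proof -
      have "(\<Sum>i\<in>I. fscale ((b + a) i) (pv1 i)) p = 0"
        unfolding fsum_apply[OF assms(1)] using that S(1) pv1 by auto
      then show ?thesis unfolding x1 using b0[of p] that IP by auto
    qed
    have "fold cl perm (b + a) = fold cl (phase h T2 ps) x1"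
      unfolding perm_def x1_def by simp
    also have "\<dots> = x1 + (\<Sum>p\<in>P. fscale (x1 p) (pv2 p))"
      unfolding pv2_def ps(1)[symmetric]
      by (rule phase_cl[where Z = P]) (use ps T2s dT2 in auto)
    also have "(\<Sum>p\<in>P. fscale (x1 p) (pv2 p)) = (\<Sum>p\<in>P. fscale (a p) (pv2 p))"
      by (rule sum.cong) (use x1p in auto)
    also have "x1 + (\<Sum>p\<in>P. fscale (a p) (pv2 p)) = wv b + (\<Sum>p\<in>P. fscale (a p) (h p))"
    proof
      fix j
      have L: "(x1 + (\<Sum>p\<in>P. fscale (a p) (pv2 p))) j =
            b j + a j + (\<Sum>i\<in>I. b i * pv1 i j) + (\<Sum>p\<in>P. a p * pv2 p j)"
      proof -
        have "(\<Sum>i\<in>I. (b + a) i * pv1 i j) = (\<Sum>i\<in>I. b i * pv1 i j)"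
          by (rule sum.cong) (use a0 IP in auto)
        then show ?thesis unfolding x1 by (simp add: fsum_apply[OF assms(1)])
      qed
      have R: "(wv b + (\<Sum>p\<in>P. fscale (a p) (h p))) j = (\<Sum>i\<in>I. b i * g i j) + (\<Sum>p\<in>P. a p * h p j)"
        unfolding wv_def by (simp add: fsum_apply[OF assms(1)])
      show "(x1 + (\<Sum>p\<in>P. fscale (a p) (pv2 p))) j = (wv b + (\<Sum>p\<in>P. fscale (a p) (h p))) j"
        unfolding L R
      proof (cases "j \<in> P")
        case True
        then have jS: "j \<in> S" "j \<notin> I" using S(1) IP by auto
        have 1: "(\<Sum>i\<in>I. b i * pv1 i j) = 0" using jS pv1 by simp
        have 2: "(\<Sum>p\<in>P. a p * pv2 p j) = 0" using True pv2 by simp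
        have 3: "(\<Sum>i\<in>I. b i * g i j) = 0"
          by (rule sum.neutral) (use jS gsys in auto)
        have 4: "(\<Sum>p\<in>P. a p * h p j) = a j"
        proof -
          have "(\<Sum>p\<in>P. a p * h p j) = (\<Sum>p\<in>P. if p = j then a p else 0)"
            by (rule sum.cong) (use True hsys in auto)
          then show ?thesis using True by simp
        qed
        show "b j + a j + (\<Sum>i\<in>I. b i * pv1 i j) + (\<Sum>p\<in>P. a p * pv2 p j) =
              (\<Sum>i\<in>I. b i * g i j) + (\<Sum>p\<in>P. a p * h p j)"
          unfolding 1 2 3 4 using b0 jS by simp
      next
        case False
        have 2: "(\<Sum>p\<in>P. a p * pv2 p j) = (\<Sum>p\<in>P. a p * h p j)" using False pv2 by simp
        show "b j + a j + (\<Sum>i\<in>I. b i * pv1 i j) + (\<Sum>p\<in>P. a p * pv2 p j) =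
              (\<Sum>i\<in>I. b i * g i j) + (\<Sum>p\<in>P. a p * h p j)"
        proof (cases "j \<in> S")
          case True
          then have jI: "j \<in> I" using False unfolding I_def by auto
          have 1: "(\<Sum>i\<in>I. b i * pv1 i j) = 0" using True pv1 by simp
          have 3: "(\<Sum>i\<in>I. b i * g i j) = b j"
          proof -
            have "(\<Sum>i\<in>I. b i * g i j) = (\<Sum>i\<in>I. if i = j then b i else 0)"
              by (rule sum.cong) (use True gsys in auto)
            then show ?thesis using jI by simp
          qed
          show ?thesis unfolding 1 2 3 using a0 False by simp
        next
          case nS: False
          have 1: "(\<Sum>i\<in>I. b i * pv1 i j) = (\<Sum>i\<in>I. b i * g i j)" using nS pv1 by simp
          have "j \<notin> I" using nS IP by auto
          then show ?thesis unfolding 1 2 using a0 b0 False by simp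
        qed
      qed
    qed
    finally show ?thesis .
  qed
  have cardD: "card D = CARD('a) ^ card P"
    using bij_betw_same_card[OF param_bij[OF lcD DP]] card_supp_set[of P, where 'a='a] by simp
  have norm: "cq TYPE('a) ^ length ps = 1 / complex_of_real (sqrt (real (card D)))"
    unfolding cardD lps cq_def by (simp add: power_divide real_sqrt_power)
  have Uket: "circuit_op gs (ket b) = css_state C2 (wv b)" if b: "b \<in> supp_set I" for b
  proof -
    have bP: "\<forall>p\<in>set ps. b p = 0" using b IP ps(1) unfolding supp_set_def by auto
    have nfp: "\<forall>g\<in>set perm. \<not> is_fourier g" unfolding perm_def using phase_nofourier by auto
    have "circuit_op gs (ket b) = circuit_op perm (circuit_op (map FourierG ps) (ket b))"
      unfolding gs_def circuit_append by simp
    also have "\<dots> = circuit_op perm (cscale (cq TYPE('a) ^ length ps) (\<Sum>a\<in>supp_set P. ket (b + a)))"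
      using fourier_phase[OF ps(2) bP] ps(1) by simp
    also have "\<dots> = cscale (cq TYPE('a) ^ length ps) (\<Sum>a\<in>supp_set P. circuit_op perm (ket (b + a)))"
      by (simp add: linear_scale'[OF linear_circuit] linear_sum''[OF linear_circuit])
    also have "(\<Sum>a\<in>supp_set P. circuit_op perm (ket (b + a))) =
               (\<Sum>a\<in>supp_set P. ket ((\<Sum>p\<in>P. fscale (a p) (h p)) + wv b))"
    proof (rule sum.cong[OF refl])
      fix a :: "'n \<Rightarrow> 'a" assume a: "a \<in> supp_set P"
      show "circuit_op perm (ket (b + a)) = ket ((\<Sum>p\<in>P. fscale (a p) (h p)) + wv b)"
        using perm_circuit[OF nfp] cls[OF b a] by (simp add: add.commute)
    qed
    also have "\<dots> = (\<Sum>c\<in>D. ket (c + wv b))"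
      using sum.reindex_bij_betw[OF param_bij[OF lcD DP], of "\<lambda>c. ket (c + wv b)"]
      unfolding h_def by simp
    finally show ?thesis unfolding css_state_def norm D_def .
  qed
  have kets: "{ket x | x. \<forall>j. j \<notin> I \<longrightarrow> x j = 0} = ket ` supp_set I"
    unfolding supp_set_def by auto
  have img: "circuit_op gs ` {ket x | x. \<forall>j. j \<notin> I \<longrightarrow> x j = 0} = css_state C2 ` C1"
  proof
    show "circuit_op gs ` {ket x | x. \<forall>j. j \<notin> I \<longrightarrow> x j = 0} \<subseteq> css_state C2 ` C1"
      unfolding kets using Uket wvC1 by auto
    show "css_state C2 ` C1 \<subseteq> circuit_op gs ` {ket x | x. \<forall>j. j \<notin> I \<longrightarrow> x j = 0}"
    proof
      fix \<psi> assume "\<psi> \<in> css_state C2 ` C1"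
      then obtain w where w: "w \<in> C1" "\<psi> = css_state C2 w" by auto
      define c where "c = (\<Sum>p\<in>P. fscale (w p) (h p))"
      have cD: "c \<in> D" unfolding c_def by (rule lc_sum[OF lcD hD])
      define w' where "w' = w - c"
      have w'C1: "w' \<in> C1" unfolding w'_def using w(1) cD assms(5) D_def by (intro lc_diff[OF assms(1)]) auto
      have w'P: "w' p = 0" if "p \<in> P" for p
      proof -
        have "c p = (\<Sum>p'\<in>P. w p' * h p' p)" unfolding c_def by (rule fsum_apply[OF assms(1)])
        also have "\<dots> = (\<Sum>p'\<in>P. if p' = p then w p' else 0)"
          by (rule sum.cong) (use that hsys in auto)
        also have "\<dots> = w p" using that by simp
        finally show ?thesis unfolding w'_def by simp
      qed
      define b where "b j = (if j \<in> I then w' j else 0)" for j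
      have bI: "b \<in> supp_set I" unfolding supp_set_def b_def by auto
      have "wv b = w'"
      proof (rule pinj_eq[OF assms(1) S(3) wvC1 w'C1], intro ballI)
        fix t assume t: "t \<in> S"
        have "wv b t = (\<Sum>i\<in>I. if i = t then b i else 0)"
          unfolding wv_def fsum_apply[OF assms(1)] by (rule sum.cong) (use t gsys in auto)
        also have "\<dots> = w' t"
          using w'P[of t] t unfolding I_def b_def by auto
        finally show "wv b t = w' t" .
      qed
      then have "w = c + wv b" unfolding w'_def by simp
      then have "\<psi> = css_state C2 (wv b)" using w(2) css_shift[of c C2 "wv b"] cD D_def by simp
      also have "\<dots> = circuit_op gs (ket b)" using Uket[OF bI] by simp
      finally show "\<psi> \<in> circuit_op gs ` {ket x | x. \<forall>j. j \<notin> I \<longrightarrow> x j = 0}"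
        unfolding kets using bI by auto
    qed
  qed
  have mh: "module_hom cscale cscale (circuit_op gs)"
    using linear_circuit module_hom_iff_linear by blast
  have span: "circuit_op gs ` qspan {ket x | x. \<forall>j. j \<notin> I \<longrightarrow> x j = 0} = css_code C1 C2"
    unfolding qspan_def css_code_def module_hom.span_image[OF mh, symmetric] img ..
  show ?thesis unfolding Let_def
    apply (rule exI[of _ gs], rule exI[of _ I])
    using cardI wf unit span nF addb mulb by blast
qed


end
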